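(* Let $\mathcal F$ be any r-forest in $G$. Then there exists a $\hat G$-r-forest $\hat{\mathcal F}$ such that $\hat F(\hat{\mathcal F})\le F(\mathcal F)$ and $\hat{\mathcal F}$ has at most $2r-2$ non-terminal vertices.
   Context: Let $G=(V,E)$ be a connected undirected network with $n$ vertices and edge lengths $c_e>0$. Let $\mathcal R=\{\{v_1,u_1\},\dots,\{v_r,u_r\}\}$ be a set of $r\ge2$ relevant pairs (r-pairs) of vertices, with $r$ a fixed constant. The objective $\Phi$ is a non-decreasing function of the connection times $(t_{\{v_i,u_i\}})_{i=1}^r$, computable in $O(r)$ time from them. A terminal vertex is a vertex belonging to some r-pair. An r-forest is a subnetwork $\mathcal F$ of the network such that: (a) $\mathcal F$ is a forest; (b) every r-pair $\{v,u\}$ is joined by a (unique) path $P_{\mathcal F}(v,u)$ in $\mathcal F$; (c) every edge of $\mathcal F$ lies on $P_{\mathcal F}(v,u)$ for some r-pair $\{v,u\}$. For an r-forest $\mathcal F$, consider orderings $(e_1,\dots,e_f)$ of all edges of $\mathcal F$, built consecutively at unit speed from time $0$, so that $e_k$ is completed at time $\sum_{j\le k}c_{e_j}$. The connection time of an r-pair is the completion time of the last-built edge of its path in $\mathcal F$. $F(\mathcal F)$ denotes the minimum of $\Phi$ over all such orderings. This is the best objective value achievable when $\mathcal F$ is the set of edges built before all r-pairs are connected. $\hat G$ is the metric closure of $G$: the complete network on $V$ in which the length of edge $(u,v)$ equals the shortest-path distance between $u$ and $v$ in $G$. A $\hat G$-r-forest is an r-forest in $\hat G$ (for the same r-pairs).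 For a $\hat G$-r-forest $\hat{\mathcal F}$, $\hat F(\hat{\mathcal F})$ is defined as $F(\cdot)$ above but with $\hat G$-lengths. A non-terminal vertex of $\hat{\mathcal F}$ is a vertex of $\hat{\mathcal F}$ that is not a terminal vertex. *)

theory Defs
  imports Complex_Main
begin

text \<open>Undirected simple networks: an edge is a two-element vertex set.
  Edge lengths are a function on edges.\<close>

definition is_path :: "'v set set \<Rightarrow> 'v \<Rightarrow> 'v \<Rightarrow> 'v list \<Rightarrow> bool" where
  "is_path F v u p \<longleftrightarrow> p \<noteq> [] \<and> hd p = v \<and> last p = u \<and> distinct p \<and>
     (\<forall>i. Suc i < length p \<longrightarrow> {p ! i, p ! Suc i} \<in> F)"

definition path_edges :: "'v list \<Rightarrow> 'v set set" where
  "path_edges p = {{p ! i, p ! Suc i} | i. Suc i < length p}"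

definition path_length :: "('v set \<Rightarrow> real) \<Rightarrow> 'v list \<Rightarrow> real" where
  "path_length c p = (\<Sum>i < length p - 1. c {p ! i, p ! Suc i})"

definition is_cycle :: "'v set set \<Rightarrow> 'v list \<Rightarrow> bool" where
  "is_cycle F p \<longleftrightarrow> length p \<ge> 3 \<and> distinct p \<and>
     (\<forall>i. Suc i < length p \<longrightarrow> {p ! i, p ! Suc i} \<in> F) \<and> {last p, hd p} \<in> F"

definition is_forest :: "'v set set \<Rightarrow> bool" where
  "is_forest F \<longleftrightarrow> \<not> (\<exists>p. is_cycle F p)"

definition network :: "'v set \<Rightarrow> 'v set set \<Rightarrow> ('v set \<Rightarrow> real) \<Rightarrow> bool" where
  "network V E c \<longleftrightarrow> finite V \<and> (\<forall>e\<in>E. \<exists>x y. x \<in> V \<and> y \<in> V \<and> x \<noteq> y \<and> e = {x, y}) \<and>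
     (\<forall>e\<in>E. c e > 0) \<and> (\<forall>x\<in>V. \<forall>y\<in>V. \<exists>p. is_path E x y p)"

text \<open>r-forest (conditions (a),(b),(c)); R is the list of r-pairs.\<close>
definition r_forest :: "'v set set \<Rightarrow> ('v \<times> 'v) list \<Rightarrow> 'v set set \<Rightarrow> bool" where
  "r_forest E R F \<longleftrightarrow> F \<subseteq> E \<and> is_forest F \<and>
     (\<forall>(v, u) \<in> set R. \<exists>p. is_path F v u p) \<and>
     (\<forall>e \<in> F. \<exists>(v, u) \<in> set R. \<exists>p. is_path F v u p \<and> e \<in> path_edges p)"

text \<open>Connection time of the r-pair (v,u) when the edges of F are built in the order es:
  completion time of the last-built edge of the (unique) path between v and u in F.\<close>
definition conn_time :: "('v set \<Rightarrow> real) \<Rightarrow> 'v set set \<Rightarrow> 'v set list \<Rightarrow> 'v \<times> 'v \<Rightarrow> real" where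
  "conn_time c F es vu = (case vu of (v, u) \<Rightarrow>
     Max {sum_list (map c (take (Suc k) es)) | k. k < length es \<and>
            es ! k \<in> path_edges (SOME p. is_path F v u p)})"

definition F_val :: "('v set \<Rightarrow> real) \<Rightarrow> ('v \<times> 'v) list \<Rightarrow> (real list \<Rightarrow> real) \<Rightarrow> 'v set set \<Rightarrow> real" where
  "F_val c R \<Phi> F = Min {\<Phi> (map (conn_time c F es) R) | es. distinct es \<and> set es = F}"

text \<open>Metric closure: complete graph on V, edge length = shortest-path distance in G.\<close>
definition closure_edges :: "'v set \<Rightarrow> 'v set set" where
  "closure_edges V = {{x, y} | x y. x \<in> V \<and> y \<in> V \<and> x \<noteq> y}"

definition closure_length :: "'v set set \<Rightarrow> ('v set \<Rightarrow> real) \<Rightarrow> 'v set \<Rightarrow> real" where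
  "closure_length E c e = Min {path_length c p | p x y. e = {x, y} \<and> is_path E x y p}"

definition terminals :: "('v \<times> 'v) list \<Rightarrow> 'v set" where
  "terminals R = fst ` set R \<union> snd ` set R"

definition forest_vertices :: "'v set set \<Rightarrow> 'v set" where
  "forest_vertices F = \<Union> F"

definition nonterminal_vertices :: "('v \<times> 'v) list \<Rightarrow> 'v set set \<Rightarrow> 'v set" where
  "nonterminal_vertices R F = forest_vertices F - terminals R"

end

theory Submission
  imports Defs
begin
fun walkp :: "'v set set \<Rightarrow> 'v list \<Rightarrow> bool" where
  "walkp F [] = False"
| "walkp F [x] = True"
| "walkp F (x # y # xs) = ({x, y} \<in> F \<and> walkp F (y # xs))"

fun wl :: "('v set \<Rightarrow> real) \<Rightarrow> 'v list \<Rightarrow> real" where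
  "wl c (x # y # xs) = c {x, y} + wl c (y # xs)"
| "wl c _ = 0"

fun wedges :: "'v list \<Rightarrow> 'v set set" where
  "wedges (x # y # xs) = insert {x, y} (wedges (y # xs))"
| "wedges _ = {}"

lemma walkp_nth: "walkp F p \<longleftrightarrow> p \<noteq> [] \<and> (\<forall>i. Suc i < length p \<longrightarrow> {p ! i, p ! Suc i} \<in> F)"
proof (induction F p rule: walkp.induct)
  case (3 F x y xs)
  show ?case
  proof
    assume h: "walkp F (x # y # xs)"
    show "x # y # xs \<noteq> [] \<and> (\<forall>i. Suc i < length (x # y # xs) \<longrightarrow> {(x # y # xs) ! i, (x # y # xs) ! Suc i} \<in> F)"
    proof (intro conjI allI impI)
      fix i assume "Suc i < length (x # y # xs)"
      then show "{(x # y # xs) ! i, (x # y # xs) ! Suc i} \<in> F"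
        using h 3 by (cases i) auto
    qed simp
  next
    assume h: "x # y # xs \<noteq> [] \<and> (\<forall>i. Suc i < length (x # y # xs) \<longrightarrow> {(x # y # xs) ! i, (x # y # xs) ! Suc i} \<in> F)"
    have "{x,y} \<in> F" using h[THEN conjunct2, rule_format, of 0] by simp
    moreover have "walkp F (y # xs)" unfolding 3
    proof (intro conjI allI impI)
      fix i assume "Suc i < length (y # xs)"
      then show "{(y # xs) ! i, (y # xs) ! Suc i} \<in> F"
        using h[THEN conjunct2, rule_format, of "Suc i"] by simp
    qed simp
    ultimately show "walkp F (x # y # xs)" by simp
  qed
qed auto

lemma wl_path_length: "path_length c p = wl c p"
proof (induction c p rule: wl.induct)
  case (1 c x y xs)
  have "path_length c (x # y # xs) = c {x, y} + path_length c (y # xs)"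
    unfolding path_length_def by (simp add: sum.lessThan_Suc_shift del: sum.lessThan_Suc)
  then show ?case using 1 by simp
next
  case ("2_1" c) then show ?case by (simp add: path_length_def)
next
  case ("2_2" c v) then show ?case by (simp add: path_length_def)
qed

lemma wedges_path_edges: "path_edges p = wedges p"
proof (induction p rule: wedges.induct)
  case (1 x y xs)
  have "path_edges (x # y # xs) = insert {x, y} (path_edges (y # xs))"
  proof (rule set_eqI, rule iffI)
    fix e assume "e \<in> path_edges (x # y # xs)"
    then obtain i where i: "Suc i < length (x # y # xs)" "e = {(x # y # xs) ! i, (x # y # xs) ! Suc i}"
      unfolding path_edges_def by blast
    show "e \<in> insert {x, y} (path_edges (y # xs))"
    proof (cases i)
      case 0 then show ?thesis using i by simp
    next
      case (Suc j)
      then have "Suc j < length (y # xs)" "e = {(y # xs) ! j, (y # xs) ! Suc j}" using i by simp_all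
      then show ?thesis unfolding path_edges_def by blast
    qed
  next
    fix e assume "e \<in> insert {x, y} (path_edges (y # xs))"
    then consider "e = {x, y}" | j where "Suc j < length (y # xs)" "e = {(y # xs) ! j, (y # xs) ! Suc j}"
      unfolding path_edges_def by blast
    then show "e \<in> path_edges (x # y # xs)"
    proof cases
      case 1
      have "Suc 0 < length (x # y # xs)" by simp
      then show ?thesis unfolding path_edges_def 1 by force
    next
      case 2
      have "Suc (Suc j) < length (x # y # xs)" using 2 by simp
      moreover have "e = {(x # y # xs) ! Suc j, (x # y # xs) ! Suc (Suc j)}" using 2 by simp
      ultimately show ?thesis unfolding path_edges_def by blast
    qed
  qed
  then show ?case using 1 by simp
qed (auto simp: path_edges_def)

lemma is_path_walkp: "is_path F v u p \<longleftrightarrow> walkp F p \<and> hd p = v \<and> last p = u \<and> distinct p"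
  unfolding is_path_def walkp_nth by auto

lemma is_cycle_walkp: "is_cycle F q \<longleftrightarrow> length q \<ge> 3 \<and> distinct q \<and> walkp F q \<and> {last q, hd q} \<in> F"
  unfolding is_cycle_def walkp_nth by auto

lemma walkp_append: "walkp F (xs @ y # ys) \<longleftrightarrow> walkp F (xs @ [y]) \<and> walkp F (y # ys)"
proof (induction xs)
  case (Cons a xs)
  then show ?case by (cases xs) auto
qed simp

lemma wl_append: "wl c (xs @ y # ys) = wl c (xs @ [y]) + wl c (y # ys)"
proof (induction xs)
  case (Cons a xs)
  then show ?case by (cases xs) auto
qed simp

lemma wedges_append: "wedges (xs @ y # ys) = wedges (xs @ [y]) \<union> wedges (y # ys)"
proof (induction xs)
  case (Cons a xs)
  then show ?case by (cases xs) auto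
qed simp

lemma walkp_snoc: "walkp F xs \<Longrightarrow> {last xs, y} \<in> F \<Longrightarrow> walkp F (xs @ [y])"
proof (induction F xs rule: walkp.induct)
qed auto

lemma walkp_rev: "walkp F xs \<Longrightarrow> walkp F (rev xs)"
proof (induction F xs rule: walkp.induct)
  case (3 F x y xs)
  then have "walkp F (rev xs @ [y])" by simp
  moreover have "{last (rev xs @ [y]), x} \<in> F" using 3 by (simp add: insert_commute)
  ultimately show ?case using walkp_snoc[of F "rev xs @ [y]" x] by simp
qed auto

lemma wl_rev: "wl c (rev xs) = wl c xs"
proof (induction c xs rule: wl.induct)
  case (1 c x y xs)
  have "wl c (rev (x # y # xs)) = wl c (rev xs @ [y]) + wl c [y, x]"
    using wl_append[of c "rev xs" y "[x]"] by simp
  then show ?case using 1 by (simp add: insert_commute)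
qed auto

lemma wedges_rev: "wedges (rev xs) = wedges xs"
proof (induction xs rule: wedges.induct)
  case (1 x y xs)
  have "wedges (rev (x # y # xs)) = wedges (rev xs @ [y]) \<union> wedges [y, x]"
    using wedges_append[of "rev xs" y "[x]"] by simp
  then show ?case using 1 by (auto simp add: insert_commute)
qed auto

lemma join_split: "p \<noteq> [] \<Longrightarrow> q \<noteq> [] \<Longrightarrow> last p = hd q \<Longrightarrow> p @ tl q = butlast p @ hd q # tl q"
  by (metis append_butlast_last_id append_Cons append_Nil append.assoc)

lemma last_join: "p \<noteq> [] \<Longrightarrow> q \<noteq> [] \<Longrightarrow> last p = hd q \<Longrightarrow> last (p @ tl q) = last q"
  by (metis join_split last_appendR list.collapse list.distinct(1))

lemma walkp_join: "walkp F p \<Longrightarrow> walkp F q \<Longrightarrow> last p = hd q \<Longrightarrow> walkp F (p @ tl q)"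
proof -
  assume a: "walkp F p" "walkp F q" "last p = hd q"
  have ne: "p \<noteq> []" "q \<noteq> []" using a by (metis walkp.simps(1))+
  have "walkp F (butlast p @ [hd q])" using a ne by (metis append_butlast_last_id)
  moreover have "walkp F (hd q # tl q)" using a ne by simp
  ultimately show ?thesis using join_split[OF ne a(3)] walkp_append by metis
qed

lemma wl_join: "p \<noteq> [] \<Longrightarrow> q \<noteq> [] \<Longrightarrow> last p = hd q \<Longrightarrow> wl c (p @ tl q) = wl c p + wl c q"
proof -
  assume ne: "p \<noteq> []" "q \<noteq> []" and a: "last p = hd q"
  have "wl c (p @ tl q) = wl c (butlast p @ [hd q]) + wl c (hd q # tl q)"
    using join_split[OF ne a] wl_append by metis
  then show ?thesis using ne a by (metis append_butlast_last_id list.collapse)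
qed

lemma wedges_join: "p \<noteq> [] \<Longrightarrow> q \<noteq> [] \<Longrightarrow> last p = hd q \<Longrightarrow> wedges (p @ tl q) = wedges p \<union> wedges q"
proof -
  assume ne: "p \<noteq> []" "q \<noteq> []" and a: "last p = hd q"
  have "wedges (p @ tl q) = wedges (butlast p @ [hd q]) \<union> wedges (hd q # tl q)"
    using join_split[OF ne a] wedges_append by metis
  then show ?thesis using ne a by (metis append_butlast_last_id list.collapse)
qed

lemma wl_nonneg: "walkp F p \<Longrightarrow> \<forall>e\<in>F. 0 \<le> c e \<Longrightarrow> 0 \<le> wl c p"
  by (induction F p rule: walkp.induct) auto

lemma shorten:
  assumes "walkp F p" "\<forall>e\<in>F. 0 \<le> c e"
  shows "\<exists>r. is_path F (hd p) (last p) r \<and> set r \<subseteq> set p \<and> wl c r \<le> wl c p"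
  using assms(1)
proof (induction "length p" arbitrary: p rule: less_induct)
  case less
  show ?case
  proof (cases "distinct p")
    case True
    then show ?thesis using less.prems by (auto simp: is_path_walkp)
  next
    case False
    then obtain xs ys zs y where p: "p = xs @ [y] @ ys @ [y] @ zs" using not_distinct_decomp by blast
    define p2 where "p2 = xs @ y # zs"
    have pe: "p = xs @ y # (ys @ y # zs)" using p by simp
    have w1: "walkp F (xs @ [y]) \<and> walkp F (y # ys @ y # zs)"
      using less.prems walkp_append[of F xs y "ys @ y # zs"] unfolding pe by simp
    have w2: "walkp F ((y # ys) @ [y]) \<and> walkp F (y # zs)"
      using w1 walkp_append[of F "y # ys" y zs] by simp
    have wp2: "walkp F p2" unfolding p2_def using w1 w2 walkp_append[of F xs y zs] by simp
    have "wl c p = wl c (xs @ [y]) + wl c (y # ys @ y # zs)"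
      unfolding pe by (rule wl_append)
    also have "wl c (y # ys @ y # zs) = wl c ((y # ys) @ [y]) + wl c (y # zs)"
      using wl_append[of c "y # ys" y zs] by simp
    finally have "wl c p = wl c p2 + wl c ((y # ys) @ [y])"
      unfolding p2_def using wl_append[of c xs y zs] by simp
    moreover have "0 \<le> wl c ((y # ys) @ [y])" using wl_nonneg w2(1) assms(2) by blast
    ultimately have le: "wl c p2 \<le> wl c p" by simp
    have "length p2 < length p" unfolding p2_def p by simp
    then obtain r where r: "is_path F (hd p2) (last p2) r" "set r \<subseteq> set p2" "wl c r \<le> wl c p2"
      using less.hyps wp2 by blast
    have "hd p2 = hd p" unfolding p2_def pe by (cases xs) simp_all
    moreover have "last p2 = last p" unfolding p2_def pe by simp
    moreover have "set p2 \<subseteq> set p" unfolding p2_def p by auto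
    ultimately show ?thesis using r le by (metis order.trans)
  qed
qed

lemma path_unique:
  assumes "is_forest F" "is_path F v u p" "is_path F v u q"
  shows "p = q"
  using assms(2,3)
proof (induction p arbitrary: v q)
  case Nil then show ?case by (simp add: is_path_def)
next
  case (Cons x p')
  have xv: "x = v" using Cons.prems by (simp add: is_path_def)
  obtain y q' where q: "q = y # q'" using Cons.prems by (cases q) (auto simp: is_path_def)
  have yv: "y = v" using Cons.prems q by (simp add: is_path_def)
  show ?case
  proof (cases "p' = []")
    case True
    then have "u = v" using Cons.prems xv by (simp add: is_path_def)
    then have "q' = []" using Cons.prems(2) q yv
      by (metis distinct.simps(2) last_ConsR last_in_set is_path_def)
    then show ?thesis using True q xv yv by simp
  next
    case pne: False
    have qne: "q' \<noteq> []"
    proof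
      assume "q' = []"
      then have "u = v" using Cons.prems q yv by (simp add: is_path_def)
      then show False using Cons.prems(1) pne xv
        by (metis distinct.simps(2) last_ConsR last_in_set is_path_def)
    qed
    have pp': "is_path F (hd p') u p'" using Cons.prems(1) pne
      by (cases p') (auto simp: is_path_walkp)
    have qq': "is_path F (hd q') u q'" using Cons.prems(2) q qne
      by (cases q') (auto simp: is_path_walkp)
    show ?thesis
    proof (cases "hd p' = hd q'")
      case True
      then show ?thesis using Cons.IH[OF pp'] qq' q xv yv by simp
    next
      case False
      define W where "W = p' @ tl (rev q')"
      have rq: "rev q' \<noteq> []" "hd (rev q') = u" "last (rev q') = hd q'" "walkp F (rev q')"
        using qne qq' walkp_rev by (auto simp: hd_rev last_rev is_path_walkp)
      have lp: "last p' = u" "walkp F p'" using pp' by (auto simp: is_path_walkp)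
      have wW: "walkp F W" unfolding W_def using walkp_join[OF lp(2) rq(4)] lp rq by simp
      have hW: "hd W = hd p'" unfolding W_def using pne by simp
      have lW: "last W = hd q'" unfolding W_def using last_join[OF pne rq(1)] lp rq by simp
      obtain r where r: "is_path F (hd p') (hd q') r" "set r \<subseteq> set W"
        using shorten[OF wW, of "\<lambda>_. 0"] hW lW by auto
      have v1: "v \<notin> set p'" using Cons.prems(1) xv by (simp add: is_path_def)
      have v2: "v \<notin> set q'" using Cons.prems(2) q yv by (simp add: is_path_def)
      have "set (tl (rev q')) \<subseteq> set q'" by (metis list.set_sel(2) set_rev subsetI tl_Nil)
      then have vW: "v \<notin> set W" unfolding W_def using v1 v2 by auto
      have rne: "r \<noteq> []" using r by (simp add: is_path_def)
      obtain r1 r' where r1: "r = r1 # r'" using rne by (cases r) auto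
      have "r' \<noteq> []" using r False r1 by (auto simp: is_path_def)
      have e1: "{v, hd p'} \<in> F" using Cons.prems(1) xv pne by (cases p') (auto simp: is_path_walkp)
      have e2: "{v, hd q'} \<in> F" using Cons.prems(2) q yv qne by (cases q') (auto simp: is_path_walkp)
      have "is_cycle F (v # r)"
        unfolding is_cycle_walkp
      proof (intro conjI)
        show "3 \<le> length (v # r)" using r1 \<open>r' \<noteq> []\<close> by (cases r') auto
        show "distinct (v # r)" using r vW by (auto simp: is_path_def)
        show "walkp F (v # r)" using r r1 e1 by (auto simp: is_path_walkp)
        show "{last (v # r), hd (v # r)} \<in> F" using r rne e2 by (auto simp: is_path_def insert_commute)
      qed
      then show ?thesis using assms(1) by (auto simp: is_forest_def)
    qed
  qed
qed

lemma is_cycle_mod: "is_cycle F q \<longleftrightarrow> 3 \<le> length q \<and> distinct q \<and>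
   (\<forall>i<length q. {q ! i, q ! (Suc i mod length q)} \<in> F)"
proof
  assume c: "is_cycle F q"
  show "3 \<le> length q \<and> distinct q \<and> (\<forall>i<length q. {q ! i, q ! (Suc i mod length q)} \<in> F)"
  proof (intro conjI allI impI)
    fix i assume i: "i < length q"
    show "{q ! i, q ! (Suc i mod length q)} \<in> F"
    proof (cases "Suc i < length q")
      case True then show ?thesis using c by (simp add: is_cycle_def)
    next
      case False
      then have "Suc i = length q" using i by simp
      then have li: "i = length q - 1" by simp
      have qne: "q \<noteq> []" using i by (metis list.size(3) not_less0)
      then have "q ! i = last q" using li by (simp add: last_conv_nth)
      moreover have "Suc i mod length q = 0" using \<open>Suc i = length q\<close> by simp
      moreover have "q ! 0 = hd q" using qne by (simp add: hd_conv_nth)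
      ultimately show ?thesis using c by (simp add: is_cycle_def)
    qed
  qed (use c in \<open>auto simp: is_cycle_def\<close>)
next
  assume c: "3 \<le> length q \<and> distinct q \<and> (\<forall>i<length q. {q ! i, q ! (Suc i mod length q)} \<in> F)"
  have ne: "q \<noteq> []" using c by auto
  have "\<forall>i. Suc i < length q \<longrightarrow> {q ! i, q ! Suc i} \<in> F"
    using c by (metis Suc_lessD mod_less)
  moreover have "{last q, hd q} \<in> F"
  proof -
    have "length q - 1 < length q" using ne by simp
    then have "{q ! (length q - 1), q ! (Suc (length q - 1) mod length q)} \<in> F" using c by blast
    moreover have "Suc (length q - 1) = length q" using ne by simp
    ultimately show ?thesis using ne by (simp add: last_conv_nth hd_conv_nth)
  qed
  ultimately show "is_cycle F q" using c by (simp add: is_cycle_def)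
qed

lemma cycle_rotate:
  assumes "is_cycle F q" shows "is_cycle F (rotate k q)"
proof -
  let ?n = "length q"
  have c: "3 \<le> ?n" "distinct q" "\<forall>i<?n. {q ! i, q ! (Suc i mod ?n)} \<in> F"
    using assms unfolding is_cycle_mod by auto
  have "\<forall>i<?n. {rotate k q ! i, rotate k q ! (Suc i mod ?n)} \<in> F"
  proof (intro allI impI)
    fix i assume i: "i < ?n"
    have n0: "0 < ?n" using i by linarith
    have "rotate k q ! i = q ! ((k + i) mod ?n)" using nth_rotate i by blast
    moreover have "rotate k q ! (Suc i mod ?n) = q ! ((k + Suc i mod ?n) mod ?n)"
      using nth_rotate n0 by (simp add: nth_rotate)
    moreover have "(k + Suc i mod ?n) mod ?n = Suc ((k + i) mod ?n) mod ?n"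
      by (simp add: mod_simps)
    moreover have "(k + i) mod ?n < ?n" using n0 by simp
    ultimately show "{rotate k q ! i, rotate k q ! (Suc i mod ?n)} \<in> F" using c(3) by simp
  qed
  then show ?thesis using c unfolding is_cycle_mod by simp
qed

lemma cycle_rotate_closing:
  assumes "is_cycle F q" "i < length q"
  shows "\<exists>q'. is_cycle F q' \<and> set q' = set q \<and> length q' = length q \<and>
    q' ! (length q - 1) = q ! i \<and> q' ! 0 = q ! (Suc i mod length q)"
proof -
  let ?n = "length q"
  let ?q = "rotate (Suc i) q"
  have n: "0 < ?n" using assms(2) by linarith
  have "?n - 1 < ?n" using n by linarith
  then have 1: "?q ! (?n - 1) = q ! ((Suc i + (?n - 1)) mod ?n)" by (rule nth_rotate)
  have eq: "Suc i + (?n - 1) = i + ?n" using n by linarith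
  have "(Suc i + (?n - 1)) mod ?n = i mod ?n" by (simp only: eq mod_add_self2)
  also have "\<dots> = i" using assms(2) by simp
  finally have 2: "?q ! (?n - 1) = q ! i" using 1 by simp
  have 3: "?q ! 0 = q ! ((Suc i + 0) mod ?n)" using n by (rule nth_rotate)
  have 4: "is_cycle F ?q" using cycle_rotate[OF assms(1)] .
  have 5: "set ?q = set q" "length ?q = ?n" by simp_all
  show ?thesis using 2 3 4 5 by (intro exI[of _ ?q]) simp
qed

lemma in_cycle_edge:
  assumes "is_cycle F q" "x \<in> set q" shows "\<exists>e\<in>F. x \<in> e"
proof -
  obtain i where "i < length q" "q ! i = x" using assms(2) by (auto simp: in_set_conv_nth)
  then show ?thesis using assms(1) unfolding is_cycle_mod by blast
qed

lemma three_cycle: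
  assumes "is_forest F" "{a, w} \<in> F" "{w, b} \<in> F" "a \<noteq> b" "a \<noteq> w" "b \<noteq> w"
  shows "{a, b} \<notin> F"
proof
  assume "{a, b} \<in> F"
  then have "is_cycle F [a, w, b]" using assms by (simp add: is_cycle_walkp insert_commute)
  then show False using assms(1) by (auto simp: is_forest_def)
qed

lemma splice_forest:
  assumes forest: "is_forest F" and aw: "{a, w} \<in> F" and wb: "{w, b} \<in> F"
    and ab: "a \<noteq> b" "a \<noteq> w" "b \<noteq> w"
    and only: "\<forall>e\<in>F. w \<in> e \<longrightarrow> e = {a, w} \<or> e = {w, b}"
  shows "is_forest (F - {{a, w}, {w, b}} \<union> {{a, b}})"
proof -
  let ?F = "F - {{a, w}, {w, b}} \<union> {{a, b}}"
  have now: "\<forall>e\<in>?F. w \<notin> e"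
  proof
    fix e assume e: "e \<in> ?F"
    show "w \<notin> e"
    proof (cases "e = {a, b}")
      case True then show ?thesis using ab by simp
    next
      case False
      then have "e \<in> F" "e \<noteq> {a, w}" "e \<noteq> {w, b}" using e by blast+
      then show ?thesis using only by blast
    qed
  qed
  have sub: "\<forall>e\<in>?F. e \<noteq> {a, b} \<longrightarrow> e \<in> F" by blast
  show ?thesis unfolding is_forest_def
  proof
    assume "\<exists>q. is_cycle ?F q"
    then obtain q where q: "is_cycle ?F q" by blast
    let ?n = "length q"
    have qc: "3 \<le> ?n" "distinct q" "\<forall>i<?n. {q ! i, q ! (Suc i mod ?n)} \<in> ?F"
      using q unfolding is_cycle_mod by auto
    show False
    proof (cases "\<exists>i<?n. {q ! i, q ! (Suc i mod ?n)} = {a, b}")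
      case False
      have "\<forall>i<?n. {q ! i, q ! (Suc i mod ?n)} \<in> F"
      proof (intro allI impI)
        fix i assume "i < ?n"
        then show "{q ! i, q ! (Suc i mod ?n)} \<in> F" using qc(3) False sub by blast
      qed
      then have "is_cycle F q" using qc(1,2) unfolding is_cycle_mod by blast
      then show False using forest by (auto simp: is_forest_def)
    next
      case True
      then obtain i where i: "i < ?n" "{q ! i, q ! (Suc i mod ?n)} = {a, b}" by blast
      obtain q' where q': "is_cycle ?F q'" "set q' = set q" "length q' = ?n"
        "q' ! (?n - 1) = q ! i" "q' ! 0 = q ! (Suc i mod ?n)"
        using cycle_rotate_closing[OF q i(1)] by blast
      have q'c: "distinct q'" "\<forall>j<?n. {q' ! j, q' ! (Suc j mod ?n)} \<in> ?F"
        using q'(1,3) unfolding is_cycle_mod by auto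
      have cl: "{q' ! (?n - 1), q' ! 0} = {a, b}" using q' i by simp
      have wq: "w \<notin> set q'"
      proof
        assume "w \<in> set q'"
        then obtain e where "e \<in> ?F" "w \<in> e" using in_cycle_edge[OF q'(1)] by blast
        then show False using now by blast
      qed
      have edges: "\<forall>j. Suc j < ?n \<longrightarrow> {q' ! j, q' ! Suc j} \<in> F"
      proof (intro allI impI)
        fix j assume j: "Suc j < ?n"
        have m: "Suc j mod ?n = Suc j" using j by (rule mod_less)
        have "j < ?n" using j by linarith
        then have inF: "{q' ! j, q' ! Suc j} \<in> ?F" using q'c(2) m by metis
        have "{q' ! j, q' ! Suc j} \<noteq> {a, b}"
        proof
          assume eq: "{q' ! j, q' ! Suc j} = {a, b}"
          have dn: "\<And>x y. x < ?n \<Longrightarrow> y < ?n \<Longrightarrow> q' ! x = q' ! y \<Longrightarrow> x = y"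
            using q'c(1) q'(3) nth_eq_iff_index_eq by metis
          have l1: "?n - 1 < ?n" "0 < ?n" "j < ?n" using j by linarith+
          have "q' ! j = q' ! (?n - 1) \<or> q' ! j = q' ! 0" using eq cl by blast
          then have "j = ?n - 1 \<or> j = 0" using dn l1 by blast
          then have j0: "j = 0" using j by linarith
          have "q' ! Suc j = q' ! (?n - 1) \<or> q' ! Suc j = q' ! 0" using eq cl by blast
          then have "Suc j = ?n - 1 \<or> Suc j = 0" using dn l1 j by blast
          then show False using j0 qc(1) by linarith
        qed
        then show "{q' ! j, q' ! Suc j} \<in> F" using inF sub by blast
      qed
      have ne: "q' \<noteq> []" using q'(3) qc(1) by auto
      have "last q' = q' ! (?n - 1)" using ne q'(3) by (simp add: last_conv_nth)
      then have lq: "last q' = a \<or> last q' = b" using cl by blast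
      have "hd q' = q' ! 0" using ne by (simp add: hd_conv_nth)
      then have hq: "hd q' = a \<or> hd q' = b" using cl by blast
      have wb': "{b, w} \<in> F" using wb by (simp add: insert_commute)
      have aw': "{w, a} \<in> F" using aw by (simp add: insert_commute)
      have e1: "{last q', w} \<in> F" using lq aw wb' by blast
      have e2: "{w, hd q'} \<in> F" using hq aw' wb by blast
      have wq': "walkp F q'" unfolding walkp_nth using ne edges q'(3) by simp
      have "is_cycle F (q' @ [w])" unfolding is_cycle_walkp
        using walkp_snoc[OF wq' e1] e2 wq q'c(1) q'(3) qc(1) ne by simp
      then show False using forest by (auto simp: is_forest_def)
    qed
  qed
qed

lemma interior:
  assumes "is_path F v u p" "w \<in> set p" "w \<noteq> v" "w \<noteq> u"
  shows "\<exists>i. 0 < i \<and> Suc i < length p \<and> p ! i = w"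
proof -
  obtain i where i: "i < length p" "p ! i = w" using assms(2) by (auto simp: in_set_conv_nth)
  have ne: "p \<noteq> []" using i by (metis list.size(3) not_less0)
  have "hd p = v" using assms(1) by (simp add: is_path_def)
  then have "p ! 0 = v" using ne by (simp add: hd_conv_nth)
  then have "i \<noteq> 0" using i assms(3) by (metis)
  moreover have "Suc i \<noteq> length p"
  proof
    assume "Suc i = length p"
    then have ii: "i = length p - 1" by simp
    have "last p = u" using assms(1) by (simp add: is_path_def)
    then have "p ! (length p - 1) = u" using ne by (simp add: last_conv_nth)
    then show False using ii i assms(4) by simp
  qed
  ultimately show ?thesis using i by (intro exI[of _ i]) simp
qed

lemma path_edge_sub: "e \<in> path_edges p \<Longrightarrow> e \<subseteq> set p"
  unfolding path_edges_def by auto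

lemma path_edges_in: "is_path F v u p \<Longrightarrow> path_edges p \<subseteq> F"
  unfolding path_edges_def is_path_def by auto

lemma splice_path:
  assumes p: "is_path F v u p" and wv: "w \<noteq> v" "w \<noteq> u"
    and aw: "{a, w} \<in> F" and wb: "{w, b} \<in> F"
    and ab: "a \<noteq> b" "a \<noteq> w" "b \<noteq> w"
    and only: "\<forall>e\<in>F. w \<in> e \<longrightarrow> e = {a, w} \<or> e = {w, b}"
    and noab: "{a, b} \<notin> F"
  shows "\<exists>p'. is_path (F - {{a, w}, {w, b}} \<union> {{a, b}}) v u p' \<and>
     path_edges p' \<subseteq> path_edges p - {{a, w}, {w, b}} \<union> {{a, b}} \<and>
     path_edges p - {{a, w}, {w, b}} \<subseteq> path_edges p' \<and>
     ({a, b} \<in> path_edges p' \<longrightarrow> {a, w} \<in> path_edges p \<and> {w, b} \<in> path_edges p) \<and>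
     ({a, w} \<in> path_edges p \<longrightarrow> {a, b} \<in> path_edges p')"
proof (cases "w \<in> set p")
  case False
  have pe: "path_edges p \<subseteq> F" using path_edges_in[OF p] .
  have nw: "\<forall>e\<in>path_edges p. w \<notin> e" using False path_edge_sub by blast
  have "\<forall>i. Suc i < length p \<longrightarrow> {p ! i, p ! Suc i} \<in> F - {{a, w}, {w, b}} \<union> {{a, b}}"
  proof (intro allI impI)
    fix i assume i: "Suc i < length p"
    then have e: "{p ! i, p ! Suc i} \<in> path_edges p" unfolding path_edges_def by blast
    then have "{p ! i, p ! Suc i} \<in> F" using pe by blast
    moreover have "{p ! i, p ! Suc i} \<noteq> {a, w}" "{p ! i, p ! Suc i} \<noteq> {w, b}" using nw e by blast+
    ultimately show "{p ! i, p ! Suc i} \<in> F - {{a, w}, {w, b}} \<union> {{a, b}}" by blast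
  qed
  then have "is_path (F - {{a, w}, {w, b}} \<union> {{a, b}}) v u p" using p unfolding is_path_def by blast
  moreover have "{a, b} \<notin> path_edges p" using pe noab by blast
  moreover have "{a, w} \<notin> path_edges p" "{w, b} \<notin> path_edges p" using nw by blast+
  ultimately show ?thesis by (intro exI[of _ p]) blast
next
  case True
  obtain i where i: "0 < i" "Suc i < length p" "p ! i = w" using interior[OF p True wv] by blast
  let ?n = "length p"
  have pne: "p \<noteq> []" using i(2) by (cases p) auto
  define idx where "idx j = (if j < i then j else Suc j)" for j
  define p' where "p' = map (\<lambda>j. p ! idx j) [0..<?n - 1]"
  have len: "length p' = ?n - 1" unfolding p'_def by simp
  have nth': "\<And>j. j < ?n - 1 \<Longrightarrow> p' ! j = p ! idx j" unfolding p'_def by simp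
  have dist: "distinct p" using p by (simp add: is_path_def)
  have walk: "\<And>j. Suc j < ?n \<Longrightarrow> {p ! j, p ! Suc j} \<in> F" using p by (simp add: is_path_def)
  have dn: "\<And>x y. x < ?n \<Longrightarrow> y < ?n \<Longrightarrow> p ! x = p ! y \<longleftrightarrow> x = y"
    using dist nth_eq_iff_index_eq by metis
  define x where "x = p ! (i - 1)"
  define y where "y = p ! Suc i"
  have ex: "{x, w} \<in> F" unfolding x_def using walk[of "i - 1"] i by simp
  have ey: "{w, y} \<in> F" unfolding y_def using walk[of i] i by simp
  have xw: "x \<noteq> w" unfolding x_def using dn[of "i - 1" i] i by simp
  have yw: "y \<noteq> w" unfolding y_def using dn[of "Suc i" i] i by simp
  have xy: "x \<noteq> y" unfolding x_def y_def using dn[of "i - 1" "Suc i"] i by simp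
  have "{x, w} = {a, w} \<or> {x, w} = {w, b}" using only[rule_format, OF ex] by simp
  then have "x \<in> {a, w} \<or> x \<in> {w, b}" by (metis insertI1)
  then have xab: "x = a \<or> x = b" using xw by blast
  have "{w, y} = {a, w} \<or> {w, y} = {w, b}" using only[rule_format, OF ey] by simp
  then have "y \<in> {a, w} \<or> y \<in> {w, b}" by (metis insertI1 insert_commute)
  then have yab: "y = a \<or> y = b" using yw by blast
  have xyab: "{x, y} = {a, b}" using xab yab xy by (cases "x = a") (simp_all add: insert_commute)
  have ewset: "{{x, w}, {w, y}} = {{a, w}, {w, b}}"
    using xab yab xy by (cases "x = a") (simp_all add: insert_commute)
  have pe_iff: "\<And>e. e \<in> path_edges p \<longleftrightarrow> (\<exists>k. Suc k < ?n \<and> e = {p ! k, p ! Suc k})"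
    unfolding path_edges_def by blast
  have pe'_iff: "\<And>e. e \<in> path_edges p' \<longleftrightarrow> (\<exists>k. Suc k < ?n - 1 \<and> e = {p ! idx k, p ! idx (Suc k)})"
  proof -
    have eqk: "\<And>k. Suc k < ?n - 1 \<Longrightarrow> {p' ! k, p' ! Suc k} = {p ! idx k, p ! idx (Suc k)}"
      using nth' by (simp add: Suc_lessD)
    fix e
    have "e \<in> path_edges p' \<longleftrightarrow> (\<exists>k. Suc k < ?n - 1 \<and> e = {p' ! k, p' ! Suc k})"
      unfolding path_edges_def len by blast
    also have "\<dots> \<longleftrightarrow> (\<exists>k. Suc k < ?n - 1 \<and> e = {p ! idx k, p ! idx (Suc k)})"
      using eqk by metis
    finally show "?thesis e" .
  qed
  have edge_i1: "{p ! (i - 1), p ! Suc (i - 1)} = {x, w}" using i unfolding x_def by simp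
  have edge_i: "{p ! i, p ! Suc i} = {w, y}" using i unfolding y_def by simp
  have other: "\<And>k. Suc k < ?n \<Longrightarrow> k \<noteq> i - 1 \<Longrightarrow> k \<noteq> i \<Longrightarrow> w \<notin> {p ! k, p ! Suc k}"
  proof -
    fix k assume k: "Suc k < ?n" "k \<noteq> i - 1" "k \<noteq> i"
    have "p ! k \<noteq> p ! i" using dn[of k i] k i by simp
    moreover have "p ! Suc k \<noteq> p ! i" using dn[of "Suc k" i] k i by simp
    ultimately show "w \<notin> {p ! k, p ! Suc k}" using i by simp
  qed
  have idx_edge: "\<And>k. Suc k < ?n - 1 \<Longrightarrow>
     (Suc k = i \<and> {p ! idx k, p ! idx (Suc k)} = {x, y}) \<or>
     (Suc k \<noteq> i \<and> {p ! idx k, p ! idx (Suc k)} = {p ! idx k, p ! Suc (idx k)} \<and>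
      Suc (idx k) < ?n \<and> idx k \<noteq> i - 1 \<and> idx k \<noteq> i)"
  proof -
    fix k assume k: "Suc k < ?n - 1"
    show "?thesis k"
    proof (cases "Suc k = i")
      case True
      then have "idx k = i - 1" "idx (Suc k) = Suc i" unfolding idx_def by simp_all
      then show ?thesis using True unfolding x_def y_def by simp
    next
      case False
      have "idx (Suc k) = Suc (idx k)" unfolding idx_def using False by (cases "k < i") simp_all
      moreover have "Suc (idx k) < ?n" unfolding idx_def using k by (cases "k < i") simp_all
      moreover have "idx k \<noteq> i - 1" unfolding idx_def using False i by (cases "k < i") simp_all
      moreover have "idx k \<noteq> i" unfolding idx_def using False i by (cases "k < i") simp_all
      ultimately show ?thesis using False by simp
    qed
  qed
  let ?F = "F - {{a, w}, {w, b}} \<union> {{a, b}}"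
  have isp: "is_path ?F v u p'"
    unfolding is_path_def
  proof (intro conjI allI impI)
    have p'ne: "p' \<noteq> []" using len i by auto
    then show "p' \<noteq> []" .
    have "p' ! 0 = p ! 0" using nth'[of 0] i unfolding idx_def by simp
    moreover have "hd p = p ! 0" using pne by (simp add: hd_conv_nth)
    ultimately show "hd p' = v" using p p'ne by (simp add: is_path_def hd_conv_nth)
    have n2: "?n - 2 < ?n - 1" "\<not> ?n - 2 < i" "Suc (?n - 2) = ?n - 1" using i by linarith+
    have "p' ! (?n - 2) = p ! (?n - 1)" using nth'[OF n2(1)] n2(2,3) unfolding idx_def by simp
    moreover have "last p' = p' ! (?n - 2)" using len p'ne n2 by (simp add: last_conv_nth numeral_2_eq_2)
    moreover have "last p = p ! (?n - 1)" using pne by (simp add: last_conv_nth)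
    ultimately show "last p' = u" using p by (simp add: is_path_def)
    show "distinct p'" unfolding distinct_conv_nth
    proof (intro allI impI)
      fix j k assume jk: "j < length p'" "k < length p'" "j \<noteq> k"
      have "idx j \<noteq> idx k" using jk unfolding idx_def by auto
      moreover have "idx j < ?n" "idx k < ?n" using jk len unfolding idx_def by auto
      ultimately show "p' ! j \<noteq> p' ! k" using dn nth' jk len by simp
    qed
    fix k assume k: "Suc k < length p'"
    then have k': "Suc k < ?n - 1" using len by simp
    have eq: "{p' ! k, p' ! Suc k} = {p ! idx k, p ! idx (Suc k)}" using nth' k' by simp
    from idx_edge[OF k'] show "{p' ! k, p' ! Suc k} \<in> ?F"
    proof
      assume "Suc k = i \<and> {p ! idx k, p ! idx (Suc k)} = {x, y}"
      then have h2: "{p ! idx k, p ! idx (Suc k)} = {x, y}" by (rule conjunct2)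
      have "{p' ! k, p' ! Suc k} = {a, b}" by (simp only: eq h2 xyab)
      then show ?thesis by simp
    next
      assume h: "Suc k \<noteq> i \<and> {p ! idx k, p ! idx (Suc k)} = {p ! idx k, p ! Suc (idx k)} \<and>
        Suc (idx k) < ?n \<and> idx k \<noteq> i - 1 \<and> idx k \<noteq> i"
      have h1: "{p ! idx k, p ! idx (Suc k)} = {p ! idx k, p ! Suc (idx k)}"
        using h[THEN conjunct2, THEN conjunct1] .
      have h3: "Suc (idx k) < ?n" "idx k \<noteq> i - 1" "idx k \<noteq> i" using h[THEN conjunct2, THEN conjunct2] by simp_all
      have nw: "w \<notin> {p ! idx k, p ! Suc (idx k)}" using other[OF h3] .
      have "{p ! idx k, p ! Suc (idx k)} \<in> F" using walk h3(1) by blast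
      moreover have "{p ! idx k, p ! Suc (idx k)} \<noteq> {a, w}" using nw by (metis insertCI)
      moreover have "{p ! idx k, p ! Suc (idx k)} \<noteq> {w, b}" using nw by (metis insertCI)
      ultimately have "{p ! idx k, p ! Suc (idx k)} \<in> F - {{a, w}, {w, b}}" by simp
      then have "{p' ! k, p' ! Suc k} \<in> F - {{a, w}, {w, b}}" by (simp only: eq h1)
      then show ?thesis by (rule UnI1)
    qed
  qed
  have s1: "path_edges p' \<subseteq> path_edges p - {{a, w}, {w, b}} \<union> {{a, b}}"
  proof
    fix e assume "e \<in> path_edges p'"
    then obtain k where k: "Suc k < ?n - 1" "e = {p ! idx k, p ! idx (Suc k)}" using pe'_iff by blast
    from idx_edge[OF k(1)] show "e \<in> path_edges p - {{a, w}, {w, b}} \<union> {{a, b}}"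
    proof
      assume "Suc k = i \<and> {p ! idx k, p ! idx (Suc k)} = {x, y}"
      then have h2: "{p ! idx k, p ! idx (Suc k)} = {x, y}" by (rule conjunct2)
      have "e = {a, b}" by (simp only: k(2) h2 xyab)
      then show ?thesis by simp
    next
      assume h: "Suc k \<noteq> i \<and> {p ! idx k, p ! idx (Suc k)} = {p ! idx k, p ! Suc (idx k)} \<and>
        Suc (idx k) < ?n \<and> idx k \<noteq> i - 1 \<and> idx k \<noteq> i"
      have h1: "{p ! idx k, p ! idx (Suc k)} = {p ! idx k, p ! Suc (idx k)}"
        using h[THEN conjunct2, THEN conjunct1] .
      have h3: "Suc (idx k) < ?n" "idx k \<noteq> i - 1" "idx k \<noteq> i" using h[THEN conjunct2, THEN conjunct2] by simp_all
      have ee: "e = {p ! idx k, p ! Suc (idx k)}" by (simp only: k(2) h1)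
      have nw: "w \<notin> e" unfolding ee using other[OF h3] .
      have "e \<in> path_edges p" unfolding ee using pe_iff h3(1) by blast
      moreover have "e \<noteq> {a, w}" using nw by (metis insertCI)
      moreover have "e \<noteq> {w, b}" using nw by (metis insertCI)
      ultimately show ?thesis by simp
    qed
  qed
  have s2: "path_edges p - {{a, w}, {w, b}} \<subseteq> path_edges p'"
  proof
    fix e assume e: "e \<in> path_edges p - {{a, w}, {w, b}}"
    then obtain k where k: "Suc k < ?n" "e = {p ! k, p ! Suc k}" using pe_iff by blast
    have ein: "e \<notin> {{a, w}, {w, b}}" using e[unfolded Diff_iff] by (rule conjunct2)
    have "k \<noteq> i - 1"
    proof
      assume "k = i - 1"
      then have "e = {x, w}" using k(2) edge_i1 by simp
      then have "e \<in> {{x, w}, {w, y}}" by simp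
      then have "e \<in> {{a, w}, {w, b}}" by (simp only: ewset)
      then show False using ein by contradiction
    qed
    moreover have "k \<noteq> i"
    proof
      assume "k = i"
      then have "e = {w, y}" using k(2) edge_i by simp
      then have "e \<in> {{x, w}, {w, y}}" by simp
      then have "e \<in> {{a, w}, {w, b}}" by (simp only: ewset)
      then show False using ein by contradiction
    qed
    ultimately consider "Suc k < i" | "i < k" by linarith
    then show "e \<in> path_edges p'"
    proof cases
      case 1
      then have "idx k = k" "idx (Suc k) = Suc k" unfolding idx_def by auto
      moreover have "Suc k < ?n - 1" using 1 i by linarith
      ultimately show ?thesis using pe'_iff k by metis
    next
      case 2
      then have "idx (k - 1) = k" "idx (Suc (k - 1)) = Suc k" unfolding idx_def by auto
      moreover have "Suc (k - 1) < ?n - 1" using 2 k by linarith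
      ultimately show ?thesis using pe'_iff k by metis
    qed
  qed
  have s3: "{a, b} \<in> path_edges p'"
  proof -
    have "idx (i - 1) = i - 1" "idx (Suc (i - 1)) = Suc i" unfolding idx_def using i by auto
    moreover have "Suc (i - 1) < ?n - 1" using i by linarith
    ultimately show ?thesis using pe'_iff xyab unfolding x_def y_def by metis
  qed
  have s4: "{a, w} \<in> path_edges p \<and> {w, b} \<in> path_edges p"
  proof -
    have "Suc (i - 1) < ?n" using i by linarith
    then have "{x, w} \<in> path_edges p" using pe_iff edge_i1 by metis
    moreover have "{w, y} \<in> path_edges p" using pe_iff edge_i i(2) by metis
    ultimately have "{{x, w}, {w, y}} \<subseteq> path_edges p" by simp
    then have "{{a, w}, {w, b}} \<subseteq> path_edges p" by (simp only: ewset)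
    then show ?thesis by simp
  qed
  show ?thesis using isp s1 s2 s3 s4 by blast
qed

lemma net_pos: "network V E c \<Longrightarrow> \<forall>e\<in>E. 0 < c e"
  unfolding network_def by (elim conjE)

lemma net_finite: "network V E c \<Longrightarrow> finite V"
  unfolding network_def by (elim conjE)

lemma net_edges: "network V E c \<Longrightarrow> \<forall>e\<in>E. \<exists>x y. x \<in> V \<and> y \<in> V \<and> x \<noteq> y \<and> e = {x, y}"
  unfolding network_def by (elim conjE)

lemma net_conn: "network V E c \<Longrightarrow> \<forall>x\<in>V. \<forall>y\<in>V. \<exists>p. is_path E x y p"
  unfolding network_def by (elim conjE)

lemma walk_in_V:
  assumes net: "network V E c" shows "walkp E p \<Longrightarrow> hd p \<in> V \<Longrightarrow> set p \<subseteq> V"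
proof (induction p)
  case (Cons x xs)
  note pr = Cons.prems and ih = Cons.IH
  show ?case
  proof (cases xs)
    case Nil then show ?thesis using pr by simp
  next
    case (Cons y ys)
    have "{x, y} \<in> E" using pr(1) \<open>xs = y # ys\<close> by simp
    then obtain x' y' where "x' \<in> V" "y' \<in> V" "{x, y} = {x', y'}" using net_edges[OF net] by blast
    then have "y \<in> V" by (metis doubleton_eq_iff)
    moreover have "walkp E xs" using pr(1) \<open>xs = y # ys\<close> by simp
    ultimately have "set xs \<subseteq> V" using ih \<open>xs = y # ys\<close> by simp
    then show ?thesis using pr(2) by simp
  qed
qed simp

lemma path_rev: "is_path F x y p \<Longrightarrow> is_path F y x (rev p)"
  unfolding is_path_walkp using walkp_rev by (auto simp: hd_rev last_rev)

definition clset :: "'v set set \<Rightarrow> ('v set \<Rightarrow> real) \<Rightarrow> 'v set \<Rightarrow> real set" where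
  "clset E c e = {path_length c p | p x y. e = {x, y} \<and> is_path E x y p}"

lemma closure_length_clset: "closure_length E c e = Min (clset E c e)"
  unfolding closure_length_def clset_def by simp

lemma c_nonneg: "network V E c \<Longrightarrow> \<forall>e\<in>E. 0 \<le> c e"
  using net_pos by (metis less_imp_le)

lemma clset_props:
  assumes net: "network V E c" and ab: "a \<in> V" "b \<in> V" "a \<noteq> b"
  shows "finite (clset E c {a, b})" "clset E c {a, b} \<noteq> {}" "\<forall>t\<in>clset E c {a, b}. 0 \<le> t"
proof -
  have fV: "finite V" using net_finite[OF net] .
  have "clset E c {a, b} \<subseteq> path_length c ` {p. set p \<subseteq> V \<and> distinct p}"
  proof
    fix t assume "t \<in> clset E c {a, b}"
    then obtain p x y where t: "t = path_length c p" "{a, b} = {x, y}" "is_path E x y p"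
      unfolding clset_def by blast
    have "x \<in> V" using t(2) ab by (metis doubleton_eq_iff)
    then have "set p \<subseteq> V" using walk_in_V[OF net] t(3) by (auto simp: is_path_walkp)
    moreover have "distinct p" using t(3) by (simp add: is_path_def)
    ultimately show "t \<in> path_length c ` {p. set p \<subseteq> V \<and> distinct p}" using t(1) by blast
  qed
  then show "finite (clset E c {a, b})"
    using finite_subset finite_subset_distinct[OF fV] by blast
  obtain p where "is_path E a b p" using net_conn[OF net] ab by blast
  then show "clset E c {a, b} \<noteq> {}" unfolding clset_def by blast
  show "\<forall>t\<in>clset E c {a, b}. 0 \<le> t"
  proof
    fix t assume "t \<in> clset E c {a, b}"
    then obtain p x y where t: "t = path_length c p" "is_path E x y p"
      unfolding clset_def by blast
    then show "0 \<le> t" using wl_nonneg c_nonneg[OF net] by (auto simp: wl_path_length is_path_walkp)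
  qed
qed

lemma cl_nonneg:
  assumes "network V E c" "a \<in> V" "b \<in> V" "a \<noteq> b"
  shows "0 \<le> closure_length E c {a, b}"
  using clset_props[OF assms] unfolding closure_length_clset by (metis Min_in)

lemma cl_le:
  assumes "network V E c" "a \<in> V" "b \<in> V" "a \<noteq> b" "is_path E a b p"
  shows "closure_length E c {a, b} \<le> wl c p"
proof -
  have "path_length c p \<in> clset E c {a, b}" unfolding clset_def using assms(5) by blast
  then show ?thesis unfolding closure_length_clset wl_path_length[symmetric]
    using clset_props(1)[OF assms(1-4)] by (rule Min_le[rotated])
qed

lemma cl_attained:
  assumes "network V E c" "a \<in> V" "b \<in> V" "a \<noteq> b"
  shows "\<exists>p. is_path E a b p \<and> wl c p = closure_length E c {a, b}"
proof -
  have "Min (clset E c {a, b}) \<in> clset E c {a, b}" using clset_props[OF assms] by (metis Min_in)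
  then obtain p x y where t: "Min (clset E c {a, b}) = path_length c p" "{a, b} = {x, y}" "is_path E x y p"
    unfolding clset_def by blast
  from t(2) have "(x = a \<and> y = b) \<or> (x = b \<and> y = a)" by (metis doubleton_eq_iff)
  then show ?thesis
  proof
    assume "x = a \<and> y = b"
    then have "is_path E a b p" using t(3) by simp
    moreover have "wl c p = closure_length E c {a, b}"
      unfolding closure_length_clset t(1) wl_path_length ..
    ultimately show ?thesis by blast
  next
    assume "x = b \<and> y = a"
    then have "is_path E a b (rev p)" using path_rev[OF t(3)] by simp
    moreover have "wl c (rev p) = closure_length E c {a, b}"
      unfolding closure_length_clset t(1) wl_path_length wl_rev ..
    ultimately show ?thesis by blast
  qed
qed

lemma cl_le_c:
  assumes net: "network V E c" and e: "e \<in> E"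
  shows "closure_length E c e \<le> c e"
proof -
  obtain x y where xy: "x \<in> V" "y \<in> V" "x \<noteq> y" "e = {x, y}" using net_edges[OF net] e by blast
  have "is_path E x y [x, y]" using e xy by (simp add: is_path_walkp)
  then have "closure_length E c {x, y} \<le> wl c [x, y]" using cl_le[OF net xy(1-3)] by blast
  then show ?thesis using xy by simp
qed

lemma cl_triangle:
  assumes net: "network V E c" and V: "a \<in> V" "w \<in> V" "b \<in> V" and d: "a \<noteq> w" "w \<noteq> b" "a \<noteq> b"
  shows "closure_length E c {a, b} \<le> closure_length E c {a, w} + closure_length E c {w, b}"
proof -
  obtain p1 where p1: "is_path E a w p1" "wl c p1 = closure_length E c {a, w}"
    using cl_attained[OF net V(1,2) d(1)] by blast
  obtain p2 where p2: "is_path E w b p2" "wl c p2 = closure_length E c {w, b}"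
    using cl_attained[OF net V(2,3) d(2)] by blast
  have ne: "p1 \<noteq> []" "p2 \<noteq> []" using p1 p2 by (auto simp: is_path_def)
  have lh: "last p1 = hd p2" using p1 p2 by (simp add: is_path_def)
  have w1: "walkp E p1" using p1(1) by (simp add: is_path_walkp)
  have w2: "walkp E p2" using p2(1) by (simp add: is_path_walkp)
  have wk: "walkp E (p1 @ tl p2)" using walkp_join[OF w1 w2 lh] .
  have hd: "hd (p1 @ tl p2) = a" using p1 ne by (simp add: is_path_def)
  have lt: "last (p1 @ tl p2) = b" using last_join[OF ne lh] p2 by (simp add: is_path_def)
  obtain r where r: "is_path E a b r" "wl c r \<le> wl c (p1 @ tl p2)"
    using shorten[OF wk c_nonneg[OF net]] hd lt by blast
  have "closure_length E c {a, b} \<le> wl c r" using cl_le[OF net V(1,3) d(3) r(1)] .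
  also have "\<dots> \<le> wl c p1 + wl c p2" using r(2) wl_join[OF ne lh] by simp
  finally show ?thesis using p1 p2 by simp
qed

definition ct :: "('v set \<Rightarrow> real) \<Rightarrow> 'v set list \<Rightarrow> 'v set \<Rightarrow> real" where
  "ct c es e = sum_list (map c (takeWhile (\<lambda>x. x \<noteq> e) es)) + c e"

lemma takeWhile_nth_distinct:
  assumes "distinct es" "k < length es"
  shows "takeWhile (\<lambda>x. x \<noteq> es ! k) es = take k es"
proof -
  have es: "es = take k es @ es ! k # drop (Suc k) es" using assms(2) by (rule id_take_nth_drop)
  have "es ! k \<notin> set (take k es)"
    using assms by (metis distinct_take in_set_conv_nth length_take min_less_iff_conj nth_eq_iff_index_eq nth_take less_not_refl)
  then have "\<forall>x\<in>set (take k es). x \<noteq> es ! k" by blast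
  then have "takeWhile (\<lambda>x. x \<noteq> es ! k) (take k es @ es ! k # drop (Suc k) es) = take k es"
    by simp
  then show ?thesis using es by metis
qed

lemma conn_time_ct:
  assumes "distinct es"
  shows "conn_time c F es (v, u) = Max (ct c es ` (path_edges (SOME p. is_path F v u p) \<inter> set es))"
proof -
  let ?P = "path_edges (SOME p. is_path F v u p)"
  have "{sum_list (map c (take (Suc k) es)) | k. k < length es \<and> es ! k \<in> ?P} = ct c es ` (?P \<inter> set es)"
  proof (rule set_eqI, rule iffI)
    fix t assume "t \<in> {sum_list (map c (take (Suc k) es)) | k. k < length es \<and> es ! k \<in> ?P}"
    then obtain k where k: "t = sum_list (map c (take (Suc k) es))" "k < length es" "es ! k \<in> ?P" by blast
    have "t = ct c es (es ! k)"
      unfolding k(1) ct_def takeWhile_nth_distinct[OF assms k(2)] using k(2) by (simp add: take_Suc_conv_app_nth)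
    moreover have "es ! k \<in> ?P \<inter> set es" using k by simp
    ultimately show "t \<in> ct c es ` (?P \<inter> set es)" by blast
  next
    fix t assume "t \<in> ct c es ` (?P \<inter> set es)"
    then obtain e where e: "t = ct c es e" "e \<in> ?P" "e \<in> set es" by blast
    then obtain k where k: "k < length es" "es ! k = e" by (auto simp: in_set_conv_nth)
    have "t = sum_list (map c (take (Suc k) es))"
      unfolding e(1) ct_def k(2)[symmetric] takeWhile_nth_distinct[OF assms k(1)] using k(1)
      by (simp add: take_Suc_conv_app_nth)
    then show "t \<in> {sum_list (map c (take (Suc k) es)) | k. k < length es \<and> es ! k \<in> ?P}"
      using k e by blast
  qed
  then show ?thesis unfolding conn_time_def by simp
qed

lemma Max_le_Max:
  assumes "finite A" "A \<noteq> {}" "finite B" "\<forall>a\<in>A. \<exists>b\<in>B. a \<le> b"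
  shows "Max A \<le> (Max B :: real)"
proof -
  have "Max A \<in> A" using assms by simp
  then obtain b where "b \<in> B" "Max A \<le> b" using assms(4) by blast
  then show ?thesis using assms(3) by (meson Max_ge order.trans)
qed

lemma fval_set_finite:
  assumes "finite F"
  shows "finite {\<Phi> (map (conn_time c F es) R) | es. distinct es \<and> set es = F}"
    "{\<Phi> (map (conn_time c F es) R) | es. distinct es \<and> set es = F} \<noteq> {}"
proof -
  have "{\<Phi> (map (conn_time c F es) R) | es. distinct es \<and> set es = F} \<subseteq>
     (\<lambda>es. \<Phi> (map (conn_time c F es) R)) ` {xs. set xs \<subseteq> F \<and> distinct xs}" by blast
  then show "finite {\<Phi> (map (conn_time c F es) R) | es. distinct es \<and> set es = F}"
    using finite_subset finite_subset_distinct[OF assms] by blast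
  obtain es where "set es = F" "distinct es" using finite_distinct_list[OF assms] by blast
  then show "{\<Phi> (map (conn_time c F es) R) | es. distinct es \<and> set es = F} \<noteq> {}" by blast
qed

lemma fval_le:
  assumes "finite F" "distinct es" "set es = F"
  shows "F_val c R \<Phi> F \<le> \<Phi> (map (conn_time c F es) R)"
  unfolding F_val_def using fval_set_finite[OF assms(1)] assms by (intro Min_le) blast+

lemma fval_attained:
  assumes "finite F"
  shows "\<exists>es. distinct es \<and> set es = F \<and> F_val c R \<Phi> F = \<Phi> (map (conn_time c F es) R)"
proof -
  have "F_val c R \<Phi> F \<in> {\<Phi> (map (conn_time c F es) R) | es. distinct es \<and> set es = F}"
    unfolding F_val_def using fval_set_finite[OF assms] by (rule Min_in)
  then show ?thesis by blast
qed

lemma list_all2_map_same: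
  "(\<And>x. x \<in> set xs \<Longrightarrow> P (f x) (g x)) \<Longrightarrow> list_all2 P (map f xs) (map g xs)"
  by (induction xs) auto

lemma fval_mono_edges:
  assumes fin: "finite F"
    and le: "\<forall>e\<in>F. c1 e \<le> c2 e"
    and mono: "\<forall>ts ts'. length ts = length R \<longrightarrow> list_all2 (\<le>) ts ts' \<longrightarrow> \<Phi> ts \<le> \<Phi> ts'"
  shows "F_val c1 R \<Phi> F \<le> F_val c2 R \<Phi> F"
proof -
  obtain es where es: "distinct es" "set es = F" "F_val c2 R \<Phi> F = \<Phi> (map (conn_time c2 F es) R)"
    using fval_attained[OF fin] by blast
  have ct: "conn_time c1 F es vu \<le> conn_time c2 F es vu" for vu
  proof -
    obtain v u where vu: "vu = (v, u)" by (cases vu)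
    let ?P = "path_edges (SOME p. is_path F v u p)"
    let ?K = "{k. k < length es \<and> es ! k \<in> ?P}"
    have A: "{sum_list (map c1 (take (Suc k) es)) | k. k < length es \<and> es ! k \<in> ?P} =
       (\<lambda>k. sum_list (map c1 (take (Suc k) es))) ` ?K" by blast
    have B: "{sum_list (map c2 (take (Suc k) es)) | k. k < length es \<and> es ! k \<in> ?P} =
       (\<lambda>k. sum_list (map c2 (take (Suc k) es))) ` ?K" by blast
    have fK: "finite ?K" by simp
    have C1: "conn_time c1 F es vu = Max ((\<lambda>k. sum_list (map c1 (take (Suc k) es))) ` ?K)"
      unfolding conn_time_def vu prod.case A ..
    have C2: "conn_time c2 F es vu = Max ((\<lambda>k. sum_list (map c2 (take (Suc k) es))) ` ?K)"
      unfolding conn_time_def vu prod.case B ..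
    show ?thesis
    proof (cases "?K = {}")
      case True
      show ?thesis unfolding C1 C2 True image_empty ..
    next
      case False
      have "\<forall>a\<in>(\<lambda>k. sum_list (map c1 (take (Suc k) es))) ` ?K.
              \<exists>b\<in>(\<lambda>k. sum_list (map c2 (take (Suc k) es))) ` ?K. a \<le> b"
      proof
        fix a assume "a \<in> (\<lambda>k. sum_list (map c1 (take (Suc k) es))) ` ?K"
        then obtain k where k: "k \<in> ?K" "a = sum_list (map c1 (take (Suc k) es))" by blast
        have "\<forall>x\<in>set (take (Suc k) es). c1 x \<le> c2 x" using le es(2) by (meson in_set_takeD)
        then have "a \<le> sum_list (map c2 (take (Suc k) es))" unfolding k(2) using sum_list_mono by metis
        then show "\<exists>b\<in>(\<lambda>k. sum_list (map c2 (take (Suc k) es))) ` ?K. a \<le> b" using k(1) by blast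
      qed
      then show ?thesis unfolding C1 C2
        by (intro Max_le_Max) (use fK False in simp_all)
    qed
  qed
  have "F_val c1 R \<Phi> F \<le> \<Phi> (map (conn_time c1 F es) R)" using fval_le[OF fin es(1,2)] .
  also have "\<dots> \<le> \<Phi> (map (conn_time c2 F es) R)"
    using mono list_all2_map_same[of R "\<lambda>x y. x \<le> y", OF ct] by simp
  finally show ?thesis using es(3) by simp
qed

lemma tw_remove1:
  fixes f :: "'a \<Rightarrow> real"
  shows "P y \<Longrightarrow> (\<forall>x\<in>set xs. 0 \<le> f x) \<Longrightarrow>
    sum_list (map f (takeWhile P (remove1 y xs))) \<le> sum_list (map f (takeWhile P xs))"
proof (induction xs)
  case (Cons x xs)
  show ?case
  proof (cases "x = y")
    case True
    then show ?thesis using Cons.prems by simp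
  next
    case False
    then show ?thesis using Cons by simp
  qed
qed simp

lemma path_edges_nonempty:
  assumes "is_path F v u p" "v \<noteq> u" shows "path_edges p \<noteq> {}"
proof -
  have "p \<noteq> []" using assms by (simp add: is_path_def)
  have "length p \<noteq> 1"
  proof
    assume "length p = 1"
    then obtain x where "p = [x]" by (metis One_nat_def length_0_conv length_Suc_conv)
    then show False using assms by (auto simp: is_path_def)
  qed
  then have "Suc 0 < length p" using \<open>p \<noteq> []\<close> by (cases p) auto
  then have "{p ! 0, p ! Suc 0} \<in> path_edges p" unfolding path_edges_def by blast
  then show ?thesis by blast
qed

lemma finite_path_edges: "finite (path_edges p)"
  unfolding path_edges_def by (rule finite_image_set, rule finite_subset[of _ "{..<length p}"]) auto

lemma set_aux:
  assumes "A \<inter> B = {}" "L \<notin> A" "L \<notin> B" "E1 \<in> A"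
  shows "(A - {E1}) \<union> {Z} \<union> B = (A \<union> {L} \<union> B) - {E1, L} \<union> {Z}"
  using assms by auto

lemma splice_fval:
  fixes l :: "'v set \<Rightarrow> real"
  assumes forest: "is_forest Fh" and fin: "finite Fh"
    and aw: "{a, w} \<in> Fh" and wb: "{w, b} \<in> Fh" and ab: "a \<noteq> b" "a \<noteq> w" "b \<noteq> w"
    and only: "\<forall>e\<in>Fh. w \<in> e \<longrightarrow> e = {a, w} \<or> e = {w, b}"
    and conn: "\<forall>(v, u)\<in>set R. v \<noteq> u \<and> w \<noteq> v \<and> w \<noteq> u \<and> (\<exists>p. is_path Fh v u p)"
    and nn: "\<forall>e\<in>Fh. 0 \<le> l e"
    and tri: "l {a, b} \<le> l {a, w} + l {w, b}"
    and mono: "\<forall>ts ts'. length ts = length R \<longrightarrow> list_all2 (\<le>) ts ts' \<longrightarrow> \<Phi> ts \<le> \<Phi> ts'"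
  shows "F_val l R \<Phi> (Fh - {{a, w}, {w, b}} \<union> {{a, b}}) \<le> F_val l R \<Phi> Fh"
proof -
  let ?F = "Fh - {{a, w}, {w, b}} \<union> {{a, b}}"
  have noab: "{a, b} \<notin> Fh" using three_cycle[OF forest aw wb ab] .
  have forest': "is_forest ?F" using splice_forest[OF forest aw wb ab only] .
  have fin': "finite ?F" using fin by simp
  obtain es where es: "distinct es" "set es = Fh" "F_val l R \<Phi> Fh = \<Phi> (map (conn_time l Fh es) R)"
    using fval_attained[OF fin] by blast
  have awwb: "{a, w} \<noteq> {w, b}" using ab by (metis doubleton_eq_iff)
  obtain xs L ys E1 where split: "es = xs @ L # ys" "E1 \<in> set xs"
    and EL: "{{a, w}, {w, b}} = {E1, L}"
  proof -
    obtain p1 p2 where p: "es = p1 @ {a, w} # p2" using aw es(2) by (metis split_list)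
    show ?thesis
    proof (cases "{w, b} \<in> set p1")
      case True
      show ?thesis by (rule that[OF p True]) (simp add: insert_commute)
    next
      case False
      then have "{w, b} \<in> set p2" using wb es(2) p awwb by auto
      then obtain q1 q2 where q: "p2 = q1 @ {w, b} # q2" by (metis split_list)
      have "es = (p1 @ {a, w} # q1) @ {w, b} # q2" using p q by simp
      moreover have "{a, w} \<in> set (p1 @ {a, w} # q1)" by simp
      ultimately show ?thesis by (rule that) simp
    qed
  qed
  have dx: "distinct xs" "L \<notin> set xs" "L \<notin> set ys" "set xs \<inter> set ys = {}" "distinct ys"
    using es(1) split(1) by auto
  have E1L: "E1 \<noteq> L" using dx(2) split(2) by blast
  have E1ys: "E1 \<notin> set ys" using dx(4) split(2) by blast
  define es' where "es' = remove1 E1 xs @ {a, b} # ys"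
  have setr: "set (remove1 E1 xs) = set xs - {E1}" using dx(1) by simp
  have abes: "{a, b} \<notin> set es" using noab es(2) by simp
  have dist': "distinct es'" unfolding es'_def using dx setr abes split(1) by auto
  have set': "set es' = ?F"
  proof -
    have "set es' = (set xs - {E1}) \<union> {{a, b}} \<union> set ys" unfolding es'_def setr[symmetric] by simp
    also have "\<dots> = (set xs \<union> {L} \<union> set ys) - {E1, L} \<union> {{a, b}}"
      using set_aux[OF dx(4) dx(2) dx(3) split(2)] .
    also have "\<dots> = ?F" unfolding EL es(2)[symmetric] split(1) by simp
    finally show ?thesis .
  qed
  have nnx: "\<forall>x\<in>set xs. 0 \<le> l x" using nn es(2) split(1) by auto
  have sumx: "sum_list (map l xs) = l E1 + sum_list (map l (remove1 E1 xs))"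
    using split(2) by (rule sum_list_map_remove1)
  have ct_ab: "ct l es' {a, b} \<le> ct l es L"
  proof -
    have "takeWhile (\<lambda>x. x \<noteq> {a, b}) es' = remove1 E1 xs"
    proof -
      have "\<forall>x\<in>set (remove1 E1 xs). x \<noteq> {a, b}" using abes setr split(1) by auto
      then show ?thesis unfolding es'_def by simp
    qed
    moreover have "takeWhile (\<lambda>x. x \<noteq> L) es = xs"
    proof -
      have "\<forall>x\<in>set xs. x \<noteq> L" using dx(2) by blast
      then show ?thesis unfolding split(1) by (simp add: takeWhile_append2)
    qed
    moreover have "l {a, b} \<le> l E1 + l L" using tri EL by (metis doubleton_eq_iff insert_absorb2 add.commute awwb)
    ultimately show ?thesis unfolding ct_def using sumx by simp
  qed
  have ct_other: "ct l es' e \<le> ct l es e" if e: "e \<in> set es" "e \<noteq> E1" "e \<noteq> L" for e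
  proof -
    have "e \<in> set xs \<or> e \<in> set ys" using e split(1) by auto
    then show ?thesis
    proof
      assume ex: "e \<in> set xs"
      then have er: "e \<in> set (remove1 E1 xs)" using setr e(2) by simp
      have t1: "takeWhile (\<lambda>x. x \<noteq> e) es' = takeWhile (\<lambda>x. x \<noteq> e) (remove1 E1 xs)"
        unfolding es'_def using er by simp
      have t2: "takeWhile (\<lambda>x. x \<noteq> e) es = takeWhile (\<lambda>x. x \<noteq> e) xs"
        unfolding split(1) using ex by simp
      have "sum_list (map l (takeWhile (\<lambda>x. x \<noteq> e) (remove1 E1 xs))) \<le> sum_list (map l (takeWhile (\<lambda>x. x \<noteq> e) xs))"
        using tw_remove1[of "\<lambda>x. x \<noteq> e" E1 xs l] e(2) nnx by simp
      then show ?thesis unfolding ct_def t1 t2 by simp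
    next
      assume ey: "e \<in> set ys"
      have nx: "\<forall>x\<in>set xs. x \<noteq> e" using ey dx(4) by blast
      have nr: "\<forall>x\<in>set (remove1 E1 xs). x \<noteq> e" using nx setr by blast
      have nab: "{a, b} \<noteq> e" using abes e(1) by blast
      have t1: "takeWhile (\<lambda>x. x \<noteq> e) es' = remove1 E1 xs @ {a, b} # takeWhile (\<lambda>x. x \<noteq> e) ys"
        unfolding es'_def using nr nab by (simp add: takeWhile_append2)
      have t2: "takeWhile (\<lambda>x. x \<noteq> e) es = xs @ L # takeWhile (\<lambda>x. x \<noteq> e) ys"
        unfolding split(1) using nx e(3) by (simp add: takeWhile_append2)
      have "l {a, b} \<le> l E1 + l L" using tri EL by (metis doubleton_eq_iff insert_absorb2 add.commute awwb)
      then show ?thesis unfolding ct_def t1 t2 using sumx by simp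
    qed
  qed
  have ctle: "conn_time l ?F es' vu \<le> conn_time l Fh es vu" if vu: "vu \<in> set R" for vu
  proof -
    obtain v u where vu': "vu = (v, u)" by (cases vu)
    have c: "v \<noteq> u" "w \<noteq> v" "w \<noteq> u" "\<exists>p. is_path Fh v u p" using conn vu vu' by auto
    define p0 where "p0 = (SOME p. is_path Fh v u p)"
    have p0: "is_path Fh v u p0" unfolding p0_def using c(4) by (rule someI_ex)
    obtain p' where p': "is_path ?F v u p'"
      "path_edges p' \<subseteq> path_edges p0 - {{a, w}, {w, b}} \<union> {{a, b}}"
      "{a, b} \<in> path_edges p' \<longrightarrow> {a, w} \<in> path_edges p0 \<and> {w, b} \<in> path_edges p0"
      using splice_path[OF p0 c(2,3) aw wb ab only noab] by blast
    have sp: "(SOME p. is_path ?F v u p) = p'"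
    proof (rule some_equality)
      show "is_path ?F v u p'" using p'(1) .
      fix q assume "is_path ?F v u q"
      then show "q = p'" using path_unique[OF forest' _ p'(1)] by blast
    qed
    have pe0: "path_edges p0 \<subseteq> set es" using path_edges_in[OF p0] es(2) by simp
    have pe': "path_edges p' \<subseteq> set es'" using path_edges_in[OF p'(1)] set' by simp
    have "conn_time l ?F es' vu = Max (ct l es' ` path_edges p')"
      unfolding vu' conn_time_ct[OF dist'] sp using pe' by (simp add: Int_absorb2)
    also have "\<dots> \<le> Max (ct l es ` path_edges p0)"
    proof (rule Max_le_Max)
      show "finite (ct l es' ` path_edges p')" by (simp add: finite_path_edges)
      show "ct l es' ` path_edges p' \<noteq> {}" using path_edges_nonempty[OF p'(1) c(1)] by simp
      show "finite (ct l es ` path_edges p0)" by (simp add: finite_path_edges)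
      show "\<forall>t\<in>ct l es' ` path_edges p'. \<exists>s\<in>ct l es ` path_edges p0. t \<le> s"
      proof
        fix t assume "t \<in> ct l es' ` path_edges p'"
        then obtain e where e: "e \<in> path_edges p'" "t = ct l es' e" by blast
        show "\<exists>s\<in>ct l es ` path_edges p0. t \<le> s"
        proof (cases "e = {a, b}")
          case True
          then have "{a, w} \<in> path_edges p0" "{w, b} \<in> path_edges p0" using p'(3) e(1) by auto
          then have "L \<in> path_edges p0" using EL by (metis insertCI insertE singletonD)
          then show ?thesis using ct_ab e(2) True by blast
        next
          case False
          then have e0: "e \<in> path_edges p0" "e \<notin> {{a, w}, {w, b}}" using p'(2) e(1) by auto
          then have "e \<noteq> E1" "e \<noteq> L" using EL by auto
          moreover have "e \<in> set es" using e0 pe0 by blast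
          ultimately show ?thesis using ct_other e0(1) e(2) by blast
        qed
      qed
    qed
    also have "\<dots> = conn_time l Fh es vu"
      unfolding vu' conn_time_ct[OF es(1)] p0_def[symmetric] using pe0 by (simp add: Int_absorb2)
    finally show ?thesis .
  qed
  have "F_val l R \<Phi> ?F \<le> \<Phi> (map (conn_time l ?F es') R)" using fval_le[OF fin' dist' set'] .
  also have "\<dots> \<le> \<Phi> (map (conn_time l Fh es) R)"
    using mono list_all2_map_same[of R "\<lambda>x y. x \<le> y", OF ctle] by simp
  finally show ?thesis using es(3) by simp
qed

lemma forest_subset: "is_forest F \<Longrightarrow> F' \<subseteq> F \<Longrightarrow> is_forest F'"
  unfolding is_forest_def is_cycle_def by blast

lemma walkp_drop: "walkp F p \<Longrightarrow> j < length p \<Longrightarrow> walkp F (drop j p)"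
  unfolding walkp_nth by auto

definition two_sets :: "'v set set \<Rightarrow> bool" where
  "two_sets F \<longleftrightarrow> (\<forall>e\<in>F. \<exists>x y. x \<noteq> y \<and> e = {x, y})"

lemma leaf_exists:
  assumes fin: "finite F" and forest: "is_forest F" and two: "two_sets F" and ne: "F \<noteq> {}"
  shows "\<exists>y z. {y, z} \<in> F \<and> y \<noteq> z \<and> (\<forall>e\<in>F. z \<in> e \<longrightarrow> e = {y, z})"
proof -
  have finU: "finite (\<Union>F)" using fin two unfolding two_sets_def by auto
  let ?P = "{p. walkp F p \<and> distinct p \<and> set p \<subseteq> \<Union>F \<and> 2 \<le> length p}"
  have finP: "finite ?P"
    by (rule finite_subset[OF _ finite_subset_distinct[OF finU]]) blast
  obtain e0 where e0: "e0 \<in> F" using ne by blast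
  then obtain x0 y0 where xy0: "x0 \<noteq> y0" "e0 = {x0, y0}" using two unfolding two_sets_def by blast
  have "[x0, y0] \<in> ?P" using e0 xy0 by auto
  then have neP: "?P \<noteq> {}" by blast
  define m where "m = Max (length ` ?P)"
  have "m \<in> length ` ?P" unfolding m_def using finP neP by simp
  then obtain p where p: "p \<in> ?P" "length p = m" by blast
  have maxp: "\<And>q. q \<in> ?P \<Longrightarrow> length q \<le> m" unfolding m_def using finP by simp
  let ?n = "length p"
  have pw: "walkp F p" "distinct p" "set p \<subseteq> \<Union>F" "2 \<le> ?n" using p by auto
  have pne: "p \<noteq> []" using pw(4) by auto
  define z where "z = last p"
  define y where "y = p ! (?n - 2)"
  have zn: "z = p ! (?n - 1)" unfolding z_def using pne by (simp add: last_conv_nth)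
  have yzF: "{y, z} \<in> F"
  proof -
    have "Suc (?n - 2) < ?n" using pw(4) by linarith
    then have "{p ! (?n - 2), p ! Suc (?n - 2)} \<in> F" using pw(1) unfolding walkp_nth by blast
    moreover have "Suc (?n - 2) = ?n - 1" using pw(4) by linarith
    ultimately show ?thesis unfolding y_def zn by simp
  qed
  have dn: "\<And>i j. i < ?n \<Longrightarrow> j < ?n \<Longrightarrow> p ! i = p ! j \<longleftrightarrow> i = j"
    using pw(2) nth_eq_iff_index_eq by metis
  have yz: "y \<noteq> z" unfolding y_def zn using dn[of "?n - 2" "?n - 1"] pw(4) by simp
  have leaf: "\<forall>e\<in>F. z \<in> e \<longrightarrow> e = {y, z}"
  proof (intro ballI impI)
    fix e assume e: "e \<in> F" "z \<in> e"
    obtain x1 y1 where xy1: "x1 \<noteq> y1" "e = {x1, y1}" using two e(1) unfolding two_sets_def by blast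
    obtain t where t: "e = {z, t}" "t \<noteq> z" using xy1 e(2) by (metis insert_commute insertE singletonD)
    show "e = {y, z}"
    proof (cases "t \<in> set p")
      case False
      have "walkp F (p @ [t])" using walkp_snoc[OF pw(1)] e(1) t(1) unfolding z_def by simp
      moreover have "distinct (p @ [t])" using False pw(2) by simp
      moreover have "set (p @ [t]) \<subseteq> \<Union>F" using pw(3) e(1) t(1) by auto
      moreover have "2 \<le> length (p @ [t])" using pw(4) by simp
      ultimately have "p @ [t] \<in> ?P" by blast
      then have "length (p @ [t]) \<le> m" by (rule maxp)
      then show ?thesis using p(2) by simp
    next
      case True
      then obtain j where j: "j < ?n" "p ! j = t" by (auto simp: in_set_conv_nth)
      have jz: "j \<noteq> ?n - 1" using j t(2) zn by auto
      show ?thesis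
      proof (cases "j = ?n - 2")
        case True
        then have "t = y" using j unfolding y_def by simp
        then show ?thesis using t(1) by (simp add: insert_commute)
      next
        case False
        then have jl: "j + 3 \<le> ?n" using jz j by linarith
        let ?q = "drop j p"
        have "is_cycle F ?q" unfolding is_cycle_walkp
        proof (intro conjI)
          show "3 \<le> length ?q" using jl by simp
          show "distinct ?q" using pw(2) by simp
          show "walkp F ?q" using walkp_drop[OF pw(1) j(1)] .
          have "last ?q = z" unfolding z_def using j(1) by simp
          moreover have "hd ?q = t" using j by (simp add: hd_drop_conv_nth)
          ultimately show "{last ?q, hd ?q} \<in> F" using e(1) t(1) by simp
        qed
        then show ?thesis using forest unfolding is_forest_def by blast
      qed
    qed
  qed
  show ?thesis using yzF yz leaf by blast
qed

lemma forest_card: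
  assumes "finite F" "is_forest F" "two_sets F" "F \<noteq> {}"
  shows "card F + 1 \<le> card (\<Union>F)"
  using assms
proof (induction "card F" arbitrary: F rule: less_induct)
  case less
  obtain y z where yz: "{y, z} \<in> F" "y \<noteq> z" "\<forall>e\<in>F. z \<in> e \<longrightarrow> e = {y, z}"
    using leaf_exists[OF less.prems] by blast
  let ?F = "F - {{y, z}}"
  have finU: "finite (\<Union>F)" using less.prems(1,3) unfolding two_sets_def by auto
  have zU: "z \<in> \<Union>F" using yz(1) by blast
  have sub: "\<Union>?F \<subseteq> \<Union>F - {z}" using yz(3) by blast
  have cF: "card F = card ?F + 1" using yz(1) less.prems(1)
    by (metis Suc_eq_plus1 card_Suc_Diff1)
  show ?case
  proof (cases "?F = {}")
    case True
    then have "F = {{y, z}}" using yz(1) by blast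
    then show ?thesis using yz(2) by simp
  next
    case False
    have "card ?F + 1 \<le> card (\<Union>?F)"
      using less.hyps[of ?F] less.prems False cF forest_subset[of F ?F]
      unfolding two_sets_def by simp
    also have "\<dots> \<le> card (\<Union>F - {z})" using sub finU by (simp add: card_mono)
    also have "\<dots> = card (\<Union>F) - 1" using zU finU by simp
    finally show ?thesis using cF zU finU
      by (metis One_nat_def add_le_imp_le_diff card_0_eq empty_iff le_diff_conv2 Suc_leI neq0_conv)
  qed
qed

lemma handshake:
  assumes fin: "finite F" and two: "two_sets F"
  shows "(\<Sum>v\<in>\<Union>F. card {e\<in>F. v \<in> e}) = 2 * card F"
proof -
  have finU: "finite (\<Union>F)" using fin two unfolding two_sets_def by auto
  have "(\<Sum>v\<in>\<Union>F. card {e\<in>F. v \<in> e}) = (\<Sum>v\<in>\<Union>F. \<Sum>e\<in>F. if v \<in> e then 1 else 0)"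
    using fin by (simp add: sum.inter_filter[symmetric])
  also have "\<dots> = (\<Sum>e\<in>F. \<Sum>v\<in>\<Union>F. if v \<in> e then 1 else 0)" by (rule sum.swap)
  also have "\<dots> = (\<Sum>e\<in>F. card e)"
  proof (rule sum.cong[OF refl])
    fix e assume e: "e \<in> F"
    have "(\<Sum>v\<in>\<Union>F. if v \<in> e then 1 else 0) = card {v \<in> \<Union>F. v \<in> e}"
      using finU by (simp add: sum.inter_filter[symmetric])
    also have "{v \<in> \<Union>F. v \<in> e} = e" using e by blast
    finally show "(\<Sum>v\<in>\<Union>F. if v \<in> e then 1 else 0) = card e" .
  qed
  also have "\<dots> = (\<Sum>e\<in>F. 2)"
  proof (rule sum.cong[OF refl])
    fix e assume "e \<in> F"
    then obtain x y where "x \<noteq> y" "e = {x, y}" using two unfolding two_sets_def by blast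
    then show "card e = 2" by simp
  qed
  finally show ?thesis by simp
qed

lemma card_terminals: "card (terminals R) \<le> 2 * length R"
proof -
  have "card (terminals R) \<le> card (fst ` set R) + card (snd ` set R)"
    unfolding terminals_def by (rule card_Un_le)
  also have "\<dots> \<le> card (set R) + card (set R)" by (intro add_mono card_image_le) simp_all
  also have "\<dots> \<le> length R + length R" by (intro add_mono card_length)
  finally show ?thesis by simp
qed

lemma count_final:
  assumes fin: "finite Fh" and forest: "is_forest Fh" and two: "two_sets Fh" and ne: "Fh \<noteq> {}"
    and deg3: "\<forall>v\<in>\<Union>Fh - terminals R. 3 \<le> card {e\<in>Fh. v \<in> e}"
  shows "card (\<Union>Fh - terminals R) \<le> 2 * length R - 2"
proof -
  let ?U = "\<Union>Fh" let ?T = "terminals R"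
  let ?N = "?U - ?T" let ?M = "?U \<inter> ?T"
  let ?d = "\<lambda>v. card {e\<in>Fh. v \<in> e}"
  have finU: "finite ?U" using fin two unfolding two_sets_def by auto
  have finN: "finite ?N" "finite ?M" using finU by auto
  have deg1: "\<forall>v\<in>?M. 1 \<le> ?d v"
  proof
    fix v assume "v \<in> ?M"
    then obtain e where "e \<in> Fh" "v \<in> e" by blast
    then have "{e\<in>Fh. v \<in> e} \<noteq> {}" by blast
    moreover have "finite {e\<in>Fh. v \<in> e}" using fin by simp
    ultimately show "1 \<le> ?d v" by (simp add: Suc_le_eq card_gt_0_iff)
  qed
  have U: "?U = ?N \<union> ?M" by blast
  have "(\<Sum>v\<in>?U. ?d v) = (\<Sum>v\<in>?N. ?d v) + (\<Sum>v\<in>?M. ?d v)"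
    by (subst U, rule sum.union_disjoint) (use finN in auto)
  moreover have "(\<Sum>v\<in>?N. ?d v) \<ge> (\<Sum>v\<in>?N. 3)" using deg3 by (intro sum_mono) blast
  moreover have "(\<Sum>v\<in>?M. ?d v) \<ge> (\<Sum>v\<in>?M. 1)" using deg1 by (intro sum_mono) blast
  ultimately have "3 * card ?N + card ?M \<le> (\<Sum>v\<in>?U. ?d v)" by simp
  also have "\<dots> = 2 * card Fh" using handshake[OF fin two] .
  finally have A: "3 * card ?N + card ?M \<le> 2 * card Fh" .
  have "card Fh + 1 \<le> card ?U" using forest_card[OF fin forest two ne] .
  also have "card ?U = card ?N + card ?M" by (subst U, rule card_Un_disjoint) (use finN in auto)
  finally have B: "card Fh + 1 \<le> card ?N + card ?M" .
  have "card ?M \<le> card ?T" by (rule card_mono) (auto simp: terminals_def)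
  also have "\<dots> \<le> 2 * length R" by (rule card_terminals)
  finally have C: "card ?M \<le> 2 * length R" .
  from A B C show ?thesis by linarith
qed

lemma closure_two_sets: "Fh \<subseteq> closure_edges V \<Longrightarrow> two_sets Fh"
  unfolding two_sets_def closure_edges_def by blast

lemma closure_finite: "finite V \<Longrightarrow> Fh \<subseteq> closure_edges V \<Longrightarrow> finite Fh"
proof -
  assume "finite V" "Fh \<subseteq> closure_edges V"
  moreover have "closure_edges V \<subseteq> Pow V" unfolding closure_edges_def by blast
  ultimately show "finite Fh" by (meson finite_Pow_iff finite_subset)
qed

lemma terminal_mem: "(v, u) \<in> set R \<Longrightarrow> v \<in> terminals R \<and> u \<in> terminals R"
  unfolding terminals_def by force

lemma rf_sub: "r_forest E' R Fh \<Longrightarrow> Fh \<subseteq> E'" unfolding r_forest_def by blast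
lemma rf_forest: "r_forest E' R Fh \<Longrightarrow> is_forest Fh" unfolding r_forest_def by blast
lemma rf_paths: "r_forest E' R Fh \<Longrightarrow> (v, u) \<in> set R \<Longrightarrow> \<exists>p. is_path Fh v u p"
  unfolding r_forest_def by blast
lemma rf_cover: "r_forest E' R Fh \<Longrightarrow> e \<in> Fh \<Longrightarrow>
   \<exists>v u p. (v, u) \<in> set R \<and> is_path Fh v u p \<and> e \<in> path_edges p"
  unfolding r_forest_def by blast

lemma deg2_nonterminal:
  assumes rf: "r_forest E' R Fh" and fin: "finite Fh" and w: "w \<in> \<Union>Fh" "w \<notin> terminals R"
  shows "2 \<le> card {e\<in>Fh. w \<in> e}"
proof -
  obtain e where e: "e \<in> Fh" "w \<in> e" using w(1) by blast
  obtain v u p where p: "(v, u) \<in> set R" "is_path Fh v u p" "e \<in> path_edges p"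
    using rf_cover[OF rf e(1)] by blast
  have wp: "w \<in> set p" using path_edge_sub[OF p(3)] e(2) by blast
  have wvu: "w \<noteq> v" "w \<noteq> u" using terminal_mem[OF p(1)] w(2) by auto
  obtain i where i: "0 < i" "Suc i < length p" "p ! i = w" using interior[OF p(2) wp wvu] by blast
  have walk: "\<And>j. Suc j < length p \<Longrightarrow> {p ! j, p ! Suc j} \<in> Fh" using p(2) by (simp add: is_path_def)
  have dn: "\<And>x y. x < length p \<Longrightarrow> y < length p \<Longrightarrow> p ! x = p ! y \<longleftrightarrow> x = y"
    using p(2) nth_eq_iff_index_eq unfolding is_path_def by metis
  define x where "x = p ! (i - 1)"
  define y where "y = p ! Suc i"
  have e1: "{x, w} \<in> Fh" unfolding x_def using walk[of "i - 1"] i by simp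
  have e2: "{w, y} \<in> Fh" unfolding y_def using walk[of i] i by simp
  have xw: "x \<noteq> w" unfolding x_def using dn[of "i - 1" i] i by simp
  have xy: "x \<noteq> y" unfolding x_def y_def using dn[of "i - 1" "Suc i"] i by simp
  have ne: "{x, w} \<noteq> {w, y}"
  proof
    assume "{x, w} = {w, y}"
    then have "x \<in> {w, y}" by (metis insertI1)
    then show False using xw xy by blast
  qed
  have "{{x, w}, {w, y}} \<subseteq> {e\<in>Fh. w \<in> e}" using e1 e2 by simp
  moreover have "finite {e\<in>Fh. w \<in> e}" using fin by simp
  ultimately have "card {{x, w}, {w, y}} \<le> card {e\<in>Fh. w \<in> e}" by (rule card_mono[rotated])
  then show ?thesis using ne by simp
qed

lemma closure_mem_V: "{x, y} \<in> closure_edges V \<Longrightarrow> x \<in> V \<and> y \<in> V"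
  unfolding closure_edges_def by (auto simp: doubleton_eq_iff)

lemma splice_rforest:
  assumes rf: "r_forest (closure_edges V) R Fh"
    and aw: "{a, w} \<in> Fh" and wb: "{w, b} \<in> Fh" and ab: "a \<noteq> b" "a \<noteq> w" "b \<noteq> w"
    and only: "\<forall>e\<in>Fh. w \<in> e \<longrightarrow> e = {a, w} \<or> e = {w, b}"
    and wt: "w \<notin> terminals R"
  shows "r_forest (closure_edges V) R (Fh - {{a, w}, {w, b}} \<union> {{a, b}})"
proof -
  let ?F = "Fh - {{a, w}, {w, b}} \<union> {{a, b}}"
  have sub: "Fh \<subseteq> closure_edges V" using rf_sub[OF rf] .
  have forest: "is_forest Fh" using rf_forest[OF rf] .
  have noab: "{a, b} \<notin> Fh" using three_cycle[OF forest aw wb ab] .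
  have aV: "a \<in> V" using closure_mem_V[of a w V] aw sub by blast
  have bV: "b \<in> V" using closure_mem_V[of w b V] wb sub by blast
  have abC: "{a, b} \<in> closure_edges V" unfolding closure_edges_def using aV bV ab(1) by blast
  have sub': "?F \<subseteq> closure_edges V" using sub abC by blast
  have forest': "is_forest ?F" using splice_forest[OF forest aw wb ab only] .
  have sp: "\<exists>p'. is_path ?F v u p' \<and>
     path_edges p' \<subseteq> path_edges p - {{a, w}, {w, b}} \<union> {{a, b}} \<and>
     path_edges p - {{a, w}, {w, b}} \<subseteq> path_edges p' \<and>
     ({a, b} \<in> path_edges p' \<longrightarrow> {a, w} \<in> path_edges p \<and> {w, b} \<in> path_edges p) \<and>
     ({a, w} \<in> path_edges p \<longrightarrow> {a, b} \<in> path_edges p')"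
    if "(v, u) \<in> set R" "is_path Fh v u p" for v u p
  proof -
    have "w \<noteq> v" "w \<noteq> u" using terminal_mem[OF that(1)] wt by auto
    then show ?thesis using splice_path[OF that(2) _ _ aw wb ab only noab] by blast
  qed
  have paths: "\<forall>(v, u)\<in>set R. \<exists>p. is_path ?F v u p"
  proof (intro ballI, clarify)
    fix v u assume vu: "(v, u) \<in> set R"
    obtain p where "is_path Fh v u p" using rf_paths[OF rf vu] by blast
    then show "\<exists>p. is_path ?F v u p" using sp[OF vu] by blast
  qed
  have cover: "\<forall>e\<in>?F. \<exists>(v, u)\<in>set R. \<exists>p. is_path ?F v u p \<and> e \<in> path_edges p"
  proof
    fix e assume e: "e \<in> ?F"
    show "\<exists>(v, u)\<in>set R. \<exists>p. is_path ?F v u p \<and> e \<in> path_edges p"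
    proof (cases "e = {a, b}")
      case True
      obtain v u p where p: "(v, u) \<in> set R" "is_path Fh v u p" "{a, w} \<in> path_edges p"
        using rf_cover[OF rf aw] by blast
      obtain p' where "is_path ?F v u p'" "{a, b} \<in> path_edges p'" using sp[OF p(1,2)] p(3) by blast
      then show ?thesis using p(1) True by blast
    next
      case False
      then have e2: "e \<in> Fh" "e \<notin> {{a, w}, {w, b}}" using e by blast+
      obtain v u p where p: "(v, u) \<in> set R" "is_path Fh v u p" "e \<in> path_edges p"
        using rf_cover[OF rf e2(1)] by blast
      have "e \<in> path_edges p - {{a, w}, {w, b}}" using p(3) e2(2) by blast
      then obtain p' where "is_path ?F v u p'" "e \<in> path_edges p'" using sp[OF p(1,2)] by blast
      then show ?thesis using p(1) by blast
    qed
  qed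
  show ?thesis unfolding r_forest_def using sub' forest' paths cover by blast
qed

lemma rf_mono: "r_forest E1 R F \<Longrightarrow> F \<subseteq> E2 \<Longrightarrow> r_forest E2 R F"
  unfolding r_forest_def by (elim conjE) (intro conjI; assumption)

lemma main_ind:
  assumes net: "network V E c"
    and r2: "length R \<ge> 2"
    and pairs: "\<forall>(v, u) \<in> set R. v \<in> V \<and> u \<in> V \<and> v \<noteq> u"
    and mono: "\<forall>ts ts'. length ts = length R \<longrightarrow> list_all2 (\<le>) ts ts' \<longrightarrow> \<Phi> ts \<le> \<Phi> ts'"
  shows "r_forest (closure_edges V) R Fh \<Longrightarrow> \<exists>Fh'. r_forest (closure_edges V) R Fh' \<and>
           F_val (closure_length E c) R \<Phi> Fh' \<le> F_val (closure_length E c) R \<Phi> Fh \<and>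
           card (nonterminal_vertices R Fh') \<le> 2 * length R - 2"
proof (induction "card Fh" arbitrary: Fh rule: less_induct)
  case less
  note rf = less.prems
  let ?cl = "closure_length E c"
  have sub: "Fh \<subseteq> closure_edges V" using rf_sub[OF rf] .
  have fin: "finite Fh" using closure_finite[OF net_finite[OF net] sub] .
  have two: "two_sets Fh" using closure_two_sets[OF sub] .
  have forest: "is_forest Fh" using rf_forest[OF rf] .
  show ?case
  proof (cases "\<exists>w\<in>\<Union>Fh - terminals R. card {e\<in>Fh. w \<in> e} = 2")
    case True
    then obtain w where w: "w \<in> \<Union>Fh" "w \<notin> terminals R" "card {e\<in>Fh. w \<in> e} = 2" by blast
    obtain e1 e2 where S: "{e\<in>Fh. w \<in> e} = {e1, e2}" "e1 \<noteq> e2" using w(3) card_2_iff by metis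
    have e1: "e1 \<in> Fh" "w \<in> e1" using S(1) by blast+
    have e2: "e2 \<in> Fh" "w \<in> e2" using S(1) by blast+
    obtain a where a: "e1 = {a, w}" "a \<noteq> w"
    proof -
      obtain x y where xy: "x \<noteq> y" "e1 = {x, y}" using two e1(1) unfolding two_sets_def by blast
      then have "w = x \<or> w = y" using e1(2) by simp
      then show ?thesis
      proof
        assume "w = x" then show ?thesis using that[of y] xy by (simp add: insert_commute)
      next
        assume "w = y" then show ?thesis using that[of x] xy by simp
      qed
    qed
    obtain b where b: "e2 = {w, b}" "b \<noteq> w"
    proof -
      obtain x y where xy: "x \<noteq> y" "e2 = {x, y}" using two e2(1) unfolding two_sets_def by blast
      then have "w = x \<or> w = y" using e2(2) by simp
      then show ?thesis
      proof
        assume "w = x" then show ?thesis using that[of y] xy by simp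
      next
        assume "w = y" then show ?thesis using that[of x] xy by (simp add: insert_commute)
      qed
    qed
    have ab: "a \<noteq> b"
    proof
      assume "a = b"
      then have "e1 = e2" using a b by (simp add: insert_commute)
      then show False using S(2) by blast
    qed
    have aw: "{a, w} \<in> Fh" and wb: "{w, b} \<in> Fh" using e1 e2 a b by simp_all
    have only: "\<forall>e\<in>Fh. w \<in> e \<longrightarrow> e = {a, w} \<or> e = {w, b}"
    proof (intro ballI impI)
      fix e assume "e \<in> Fh" "w \<in> e"
      then have "e \<in> {e1, e2}" using S(1) by blast
      then have "e = e1 \<or> e = e2" by simp
      then show "e = {a, w} \<or> e = {w, b}" unfolding a(1) b(1) .
    qed
    let ?F = "Fh - {{a, w}, {w, b}} \<union> {{a, b}}"
    have noab: "{a, b} \<notin> Fh" using three_cycle[OF forest aw wb ab a(2) b(2)] .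
    have rf': "r_forest (closure_edges V) R ?F"
      using splice_rforest[OF rf aw wb ab a(2) b(2) only w(2)] .
    have awwb: "{a, w} \<noteq> {w, b}" unfolding a(1)[symmetric] b(1)[symmetric] using S(2) .
    have cardF: "card ?F < card Fh"
    proof -
      have sub2: "{{a, w}, {w, b}} \<subseteq> Fh" using aw wb by simp
      have c2: "card {{a, w}, {w, b}} = 2" using awwb by simp
      have fin2: "finite {{a, w}, {w, b}}" by simp
      have cd: "card (Fh - {{a, w}, {w, b}}) = card Fh - 2"
        using card_Diff_subset[OF fin2 sub2] c2 by simp
      have nab: "{a, b} \<notin> Fh - {{a, w}, {w, b}}" using noab by blast
      have "?F = insert {a, b} (Fh - {{a, w}, {w, b}})" by blast
      then have "card ?F = card (Fh - {{a, w}, {w, b}}) + 1"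
        using card_insert_disjoint[OF _ nab] fin by simp
      moreover have "2 \<le> card Fh" using card_mono[OF fin sub2] c2 by simp
      ultimately show ?thesis using cd by linarith
    qed
    have aV: "a \<in> V" using closure_mem_V[of a w V] aw sub by blast
    have bV: "b \<in> V" using closure_mem_V[of w b V] wb sub by blast
    have wV: "w \<in> V" using closure_mem_V[of a w V] aw sub by blast
    have nn: "\<forall>e\<in>Fh. 0 \<le> ?cl e"
    proof
      fix e assume "e \<in> Fh"
      then obtain x y where xy: "x \<in> V" "y \<in> V" "x \<noteq> y" "e = {x, y}"
        using sub unfolding closure_edges_def by blast
      show "0 \<le> ?cl e" unfolding xy(4) using cl_nonneg[OF net xy(1-3)] .
    qed
    have tri: "?cl {a, b} \<le> ?cl {a, w} + ?cl {w, b}"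
      using cl_triangle[OF net aV wV bV a(2) b(2)[symmetric] ab] .
    have conn: "\<forall>(v, u)\<in>set R. v \<noteq> u \<and> w \<noteq> v \<and> w \<noteq> u \<and> (\<exists>p. is_path Fh v u p)"
    proof (intro ballI, clarify)
      fix v u assume vu: "(v, u) \<in> set R"
      have "v \<noteq> u" using pairs vu by blast
      moreover have "w \<noteq> v" "w \<noteq> u" using terminal_mem[OF vu] w(2) by auto
      moreover have "\<exists>p. is_path Fh v u p" using rf_paths[OF rf vu] .
      ultimately show "v \<noteq> u \<and> w \<noteq> v \<and> w \<noteq> u \<and> (\<exists>p. is_path Fh v u p)" by blast
    qed
    have fv: "F_val ?cl R \<Phi> ?F \<le> F_val ?cl R \<Phi> Fh"
      using splice_fval[OF forest fin aw wb ab a(2) b(2) only conn nn tri mono] .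
    obtain Fh' where Fh': "r_forest (closure_edges V) R Fh'" "F_val ?cl R \<Phi> Fh' \<le> F_val ?cl R \<Phi> ?F"
      "card (nonterminal_vertices R Fh') \<le> 2 * length R - 2"
      using less.hyps[OF cardF rf'] by blast
    then show ?thesis using fv by (meson order.trans)
  next
    case False
    have deg3: "\<forall>v\<in>\<Union>Fh - terminals R. 3 \<le> card {e\<in>Fh. v \<in> e}"
    proof
      fix v assume v: "v \<in> \<Union>Fh - terminals R"
      have "2 \<le> card {e\<in>Fh. v \<in> e}" using deg2_nonterminal[OF rf fin] v by blast
      moreover have "card {e\<in>Fh. v \<in> e} \<noteq> 2" using False v by blast
      ultimately show "3 \<le> card {e\<in>Fh. v \<in> e}" by linarith
    qed
    have ne: "Fh \<noteq> {}"
    proof -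
      obtain vu where vu: "vu \<in> set R" using r2 by (metis length_0_conv list.set_sel(1) not_numeral_le_zero)
      obtain v u where vu': "vu = (v, u)" by (cases vu)
      have vne: "v \<noteq> u" using pairs vu vu' by blast
      obtain p where p: "is_path Fh v u p" using rf_paths[OF rf] vu vu' by blast
      have "path_edges p \<noteq> {}" using path_edges_nonempty[OF p vne] .
      moreover have "path_edges p \<subseteq> Fh" using path_edges_in[OF p] .
      ultimately show ?thesis by blast
    qed
    have "card (nonterminal_vertices R Fh) \<le> 2 * length R - 2"
      unfolding nonterminal_vertices_def forest_vertices_def using count_final[OF fin forest two ne deg3] .
    then show ?thesis using rf by blast
  qed
qed

theorem lemma3:
  fixes V :: "'v set" and E :: "'v set set" and c :: "'v set \<Rightarrow> real"
    and R :: "('v \<times> 'v) list" and \<Phi> :: "real list \<Rightarrow> real" and F :: "'v set set"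
  assumes net: "network V E c"
    and r2: "length R \<ge> 2"
    and pairs: "\<forall>(v, u) \<in> set R. v \<in> V \<and> u \<in> V \<and> v \<noteq> u"
    and mono: "\<forall>ts ts'. length ts = length R \<longrightarrow> list_all2 (\<le>) ts ts' \<longrightarrow> \<Phi> ts \<le> \<Phi> ts'"
    and F: "r_forest E R F"
  shows "\<exists>Fh. r_forest (closure_edges V) R Fh \<and>
           F_val (closure_length E c) R \<Phi> Fh \<le> F_val c R \<Phi> F \<and>
           card (nonterminal_vertices R Fh) \<le> 2 * length R - 2"
proof -
  have FE: "F \<subseteq> E" using rf_sub[OF F] .
  have EC: "E \<subseteq> closure_edges V"
  proof
    fix e assume "e \<in> E"
    then obtain x y where "x \<in> V" "y \<in> V" "x \<noteq> y" "e = {x, y}" using net_edges[OF net] by blast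
    then show "e \<in> closure_edges V" unfolding closure_edges_def by blast
  qed
  have rf: "r_forest (closure_edges V) R F" using rf_mono[OF F] FE EC by blast
  have fin: "finite F" using closure_finite[OF net_finite[OF net]] FE EC by blast
  have le: "\<forall>e\<in>F. closure_length E c e \<le> c e" using cl_le_c[OF net] FE by blast
  have v1: "F_val (closure_length E c) R \<Phi> F \<le> F_val c R \<Phi> F"
    using fval_mono_edges[OF fin le mono] .
  obtain Fh where Fh: "r_forest (closure_edges V) R Fh"
    "F_val (closure_length E c) R \<Phi> Fh \<le> F_val (closure_length E c) R \<Phi> F"
    "card (nonterminal_vertices R Fh) \<le> 2 * length R - 2"
    using main_ind[OF net r2 pairs mono rf] by blast
  then show ?thesis using v1 by (meson order.trans)
qed

end
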